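(* Assume (A1)–(A3). Let $u\in USC(\overline{Q_T})$ be a viscosity subsolution and $v\in LSC(\overline{Q_T})$ a viscosity supersolution of $\partial_t^\alpha u+H(t,x,u,Du)=0$ in $Q_T$. If $u(0,\cdot)\le v(0,\cdot)$ on $\mathbb{T}^d$, then $u\le v$ on $\overline{Q_T}$.
   Context: Fix $d\ge1$, $T>0$, $\alpha\in(0,1)$. $\mathbb{T}^d=\mathbb{R}^d/\mathbb{Z}^d$; functions on $[0,T]\times\mathbb{T}^d$ are identified with functions on $[0,T]\times\mathbb{R}^d$ $\mathbb{Z}^d$-periodic in $x$. $Q_T=(0,T]\times\mathbb{T}^d$, $\overline{Q_T}=[0,T]\times\mathbb{T}^d$; $D$ spatial gradient; $\partial_t^\alpha$ Caputo's derivative $(\partial_t^\alpha f)(t)=\frac{1}{\Gamma(1-\alpha)}\int_0^t f'(s)(t-s)^{-\alpha}ds$. $H:\overline{Q_T}\times\mathbb{R}\times\mathbb{R}^d\to\mathbb{R}$. Assumptions: (A1) $H$ is continuous. (A2) There is a modulus $\omega:[0,\infty)\to[0,\infty)$ with $|H(t,x,r,p)-H(t,y,r,p)|\le\omega(|x-y|(1+|p|))$ for all $t\in[0,T]$, $x,y\in\mathbb{R}^d$, $r\in\mathbb{R}$, $p\in\mathbb{R}^d$. (A3) $r\mapsto H(t,x,r,p)$ is nondecreasing. $\mathcal{C}^1([a,b]\times O)=\{\phi\in C^1((a,b]\times O)\cap C([a,b]\times O):\partial_t\phi(\cdot,x)\in L^1(a,b)\ \forall x\in O\}$. For measurable $f(t,x)$,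 $t\in(0,T]$, $r\in[0,t]$: $J_r[f](t,x)=\frac{\alpha}{\Gamma(1-\alpha)}\int_0^r (f(t,x)-f(t-\tau,x))\tau^{-\alpha-1}d\tau$, $K_r[f](t,x)=\frac{f(t,x)-f(0,x)}{t^\alpha\Gamma(1-\alpha)}+\frac{\alpha}{\Gamma(1-\alpha)}\int_r^t (f(t,x)-f(t-\tau,x))\tau^{-\alpha-1}d\tau$ (lower limit $0$: improper integral). Viscosity sub/supersolution: $u\in USC(\overline{Q_T})$ (resp. $LSC$) such that for all $a<b$ in $[0,T]$, every open ball $B\subset\mathbb{R}^d$, every $\phi\in\mathcal{C}^1([0,T]\times\mathbb{R}^d)$ and every $(\hat t,\hat x)\in(a,b]\times B$ where $u-\phi$ attains its maximum (resp. minimum) over $[a,b]\times\overline B$: $J_{\hat t-a}[\phi](\hat t,\hat x)+K_{\hat t-a}[u](\hat t,\hat x)+H(\hat t,\hat x,u(\hat t,\hat x),D\phi(\hat t,\hat x))\le0$ (resp. $\ge0$). *)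

theory Defs
  imports "HOL-Analysis.Analysis"
begin

text \<open>Functions on [0,T] x T^d are represented as functions
  real => real^'d => real that are Z^d-periodic in the space variable.\<close>

definition periodic_x :: "(real \<Rightarrow> real^'d \<Rightarrow> 'b) \<Rightarrow> bool" where
  "periodic_x f \<longleftrightarrow> (\<forall>t x z. (\<forall>i. z $ i \<in> \<int>) \<longrightarrow> f t (x + z) = f t x)"

definition usc_on :: "'a::topological_space set \<Rightarrow> ('a \<Rightarrow> real) \<Rightarrow> bool" where
  "usc_on S f \<longleftrightarrow> (\<forall>p\<in>S. \<forall>e>0. \<forall>\<^sub>F q in at p within S. f q < f p + e)"

definition lsc_on :: "'a::topological_space set \<Rightarrow> ('a \<Rightarrow> real) \<Rightarrow> bool" where
  "lsc_on S f \<longleftrightarrow> (\<forall>p\<in>S. \<forall>e>0. \<forall>\<^sub>F q in at p within S. f p - e < f q)"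

definition is_modulus :: "(real \<Rightarrow> real) \<Rightarrow> bool" where
  "is_modulus \<omega> \<longleftrightarrow> (\<forall>r\<ge>0. 0 \<le> \<omega> r) \<and> mono_on {0..} \<omega> \<and> \<omega> 0 = 0
     \<and> (\<omega> \<longlongrightarrow> 0) (at_right 0)"

definition C1_test :: "real \<Rightarrow> (real \<Rightarrow> real^'d \<Rightarrow> real) \<Rightarrow> (real \<Rightarrow> real^'d \<Rightarrow> real)
     \<Rightarrow> (real \<Rightarrow> real^'d \<Rightarrow> real^'d) \<Rightarrow> bool" where
  "C1_test T \<phi> \<phi>t D\<phi> \<longleftrightarrow>
     continuous_on ({0..T} \<times> UNIV) (\<lambda>p. \<phi> (fst p) (snd p)) \<and>
     (\<forall>t\<in>{0<..T}. \<forall>x. ((\<lambda>p. \<phi> (fst p) (snd p)) has_derivative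
         (\<lambda>h. fst h * \<phi>t t x + D\<phi> t x \<bullet> snd h)) (at (t, x) within {0<..T} \<times> UNIV)) \<and>
     continuous_on ({0<..T} \<times> UNIV) (\<lambda>p. \<phi>t (fst p) (snd p)) \<and>
     continuous_on ({0<..T} \<times> UNIV) (\<lambda>p. D\<phi> (fst p) (snd p)) \<and>
     (\<forall>x. set_integrable lborel {0<..<T} (\<lambda>t. \<phi>t t x))"

definition eint :: "real set \<Rightarrow> (real \<Rightarrow> real) \<Rightarrow> ereal" where
  "eint S g = enn2ereal (\<integral>\<^sup>+ \<tau>\<in>S. ennreal (g \<tau>) \<partial>lborel)
            - enn2ereal (\<integral>\<^sup>+ \<tau>\<in>S. ennreal (- g \<tau>) \<partial>lborel)"

definition J_op :: "real \<Rightarrow> real \<Rightarrow> (real \<Rightarrow> real^'d \<Rightarrow> real) \<Rightarrow> real \<Rightarrow> real^'d \<Rightarrow> real" where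
  "J_op \<alpha> r f t x = \<alpha> / Gamma (1 - \<alpha>) *
     (LINT \<tau>:{0<..<r}|lborel. (f t x - f (t - \<tau>) x) * \<tau> powr (- \<alpha> - 1))"

definition K_op :: "real \<Rightarrow> real \<Rightarrow> (real \<Rightarrow> real^'d \<Rightarrow> real) \<Rightarrow> real \<Rightarrow> real^'d \<Rightarrow> ereal" where
  "K_op \<alpha> r f t x = ereal ((f t x - f 0 x) / (t powr \<alpha> * Gamma (1 - \<alpha>)))
     + ereal (\<alpha> / Gamma (1 - \<alpha>)) * eint {r..t} (\<lambda>\<tau>. (f t x - f (t - \<tau>) x) * \<tau> powr (- \<alpha> - 1))"

definition visc_sub :: "real \<Rightarrow> real \<Rightarrow> (real \<Rightarrow> real^'d \<Rightarrow> real \<Rightarrow> real^'d \<Rightarrow> real)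
     \<Rightarrow> (real \<Rightarrow> real^'d \<Rightarrow> real) \<Rightarrow> bool" where
  "visc_sub \<alpha> T H u \<longleftrightarrow>
     usc_on ({0..T} \<times> UNIV) (\<lambda>p. u (fst p) (snd p)) \<and>
     (\<forall>a b c \<rho> \<phi> \<phi>t D\<phi> t x. 0 \<le> a \<and> a < b \<and> b \<le> T \<and> 0 < \<rho> \<and> C1_test T \<phi> \<phi>t D\<phi>
        \<and> t \<in> {a<..b} \<and> x \<in> ball c \<rho>
        \<and> (\<forall>s\<in>{a..b}. \<forall>y\<in>cball c \<rho>. u s y - \<phi> s y \<le> u t x - \<phi> t x)
      \<longrightarrow> ereal (J_op \<alpha> (t - a) \<phi> t x) + K_op \<alpha> (t - a) u t x
            + ereal (H t x (u t x) (D\<phi> t x)) \<le> 0)"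

definition visc_super :: "real \<Rightarrow> real \<Rightarrow> (real \<Rightarrow> real^'d \<Rightarrow> real \<Rightarrow> real^'d \<Rightarrow> real)
     \<Rightarrow> (real \<Rightarrow> real^'d \<Rightarrow> real) \<Rightarrow> bool" where
  "visc_super \<alpha> T H v \<longleftrightarrow>
     lsc_on ({0..T} \<times> UNIV) (\<lambda>p. v (fst p) (snd p)) \<and>
     (\<forall>a b c \<rho> \<phi> \<phi>t D\<phi> t x. 0 \<le> a \<and> a < b \<and> b \<le> T \<and> 0 < \<rho> \<and> C1_test T \<phi> \<phi>t D\<phi>
        \<and> t \<in> {a<..b} \<and> x \<in> ball c \<rho>
        \<and> (\<forall>s\<in>{a..b}. \<forall>y\<in>cball c \<rho>. v t x - \<phi> t x \<le> v s y - \<phi> s y)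
      \<longrightarrow> ereal (J_op \<alpha> (t - a) \<phi> t x) + K_op \<alpha> (t - a) v t x
            + ereal (H t x (v t x) (D\<phi> t x)) \<ge> 0)"

end

theory Submission
  imports Defs
begin


lemma usc_metricD:
  fixes f :: "'a::metric_space \<Rightarrow> real"
  assumes "usc_on S f" "p \<in> S" "e > 0"
  shows "\<exists>d>0. \<forall>q\<in>S. dist q p < d \<longrightarrow> f q < f p + e"
proof -
  have "\<forall>\<^sub>F q in at p within S. f q < f p + e" using assms unfolding usc_on_def by blast
  then obtain d where d: "d > 0" "\<forall>q\<in>S. q \<noteq> p \<and> dist q p < d \<longrightarrow> f q < f p + e"
    unfolding eventually_at by blast
  show ?thesis using d assms(3) by (intro exI[of _ d]) auto
qed

lemma lsc_metricD:
  fixes f :: "'a::metric_space \<Rightarrow> real"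
  assumes "lsc_on S f" "p \<in> S" "e > 0"
  shows "\<exists>d>0. \<forall>q\<in>S. dist q p < d \<longrightarrow> f p - e < f q"
proof -
  have "\<forall>\<^sub>F q in at p within S. f p - e < f q" using assms unfolding lsc_on_def by blast
  then obtain d where d: "d > 0" "\<forall>q\<in>S. q \<noteq> p \<and> dist q p < d \<longrightarrow> f p - e < f q"
    unfolding eventually_at by blast
  show ?thesis using d assms(3) by (intro exI[of _ d]) auto
qed

definition uscm :: "'a::metric_space set \<Rightarrow> ('a \<Rightarrow> real) \<Rightarrow> bool" where
  "uscm S f \<longleftrightarrow> (\<forall>p\<in>S. \<forall>e>0. \<exists>d>0. \<forall>q\<in>S. dist q p < d \<longrightarrow> f q < f p + e)"

lemma usc_max:
  fixes f :: "'a::metric_space \<Rightarrow> real"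
  assumes K: "compact K" "K \<noteq> {}" and u: "uscm K f"
  shows "\<exists>p\<in>K. \<forall>q\<in>K. f q \<le> f p"
proof (rule ccontr)
  assume na: "\<not> ?thesis"
  hence "\<forall>p\<in>K. \<exists>p'\<in>K. f p < f p'" by (meson not_le)
  then obtain g where g: "\<And>p. p \<in> K \<Longrightarrow> g p \<in> K \<and> f p < f (g p)" by metis
  have "\<forall>p\<in>K. \<exists>d>0. \<forall>q\<in>K. dist q p < d \<longrightarrow> f q < f (g p)"
  proof
    fix p assume p: "p \<in> K"
    have "f (g p) - f p > 0" using g[OF p] by simp
    from u[unfolded uscm_def, rule_format, OF p this] show "\<exists>d>0. \<forall>q\<in>K. dist q p < d \<longrightarrow> f q < f (g p)"
      by auto
  qed
  then obtain dd where dd: "\<And>p. p \<in> K \<Longrightarrow> dd p > 0 \<and> (\<forall>q\<in>K. dist q p < dd p \<longrightarrow> f q < f (g p))"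
    by metis
  have "K \<subseteq> (\<Union>p\<in>K. ball p (dd p))" using dd by force
  then obtain F where F: "F \<subseteq> K" "finite F" "K \<subseteq> (\<Union>p\<in>F. ball p (dd p))"
    using compactE_image[OF K(1), of K "\<lambda>p. ball p (dd p)"] by blast
  have Fne: "F \<noteq> {}" using F K(2) by auto
  define G where "G = g ` F"
  have "finite G" "G \<noteq> {}" using F Fne G_def by auto
  then have "Max (f ` G) \<in> f ` G" by simp
  then obtain m where m: "m \<in> G" "f m = Max (f ` G)" by auto
  have mm: "\<forall>q\<in>G. f q \<le> f m" using m \<open>finite G\<close> by simp
  have "m \<in> K" using m(1) F(1) g unfolding G_def by auto
  then obtain p where p: "p \<in> F" "m \<in> ball p (dd p)" using F(3) by auto
  have "p \<in> K" using p F by auto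
  hence "f m < f (g p)" using dd[of p] p(2) \<open>m \<in> K\<close> by (simp add: dist_commute)
  moreover have "g p \<in> G" using p G_def by auto
  ultimately show False using mm by fastforce
qed

lemma powr_int0:
  fixes \<alpha> r :: real
  assumes a: "0 < \<alpha>" "\<alpha> < 1" and r: "r \<ge> 0"
  shows "set_integrable lborel {0..r} (\<lambda>\<tau>. \<tau> powr (-\<alpha>))"
    "(LINT \<tau>:{0..r}|lborel. \<tau> powr (-\<alpha>)) = r powr (1-\<alpha>) / (1-\<alpha>)"
proof -
  have hi: "((\<lambda>x. x powr (-\<alpha>)) has_integral (r powr (-\<alpha>+1) / (-\<alpha>+1))) {0..r}"
    using has_integral_powr_from_0[of "-\<alpha>" r] a r by simp
  hence "(\<lambda>x. x powr (-\<alpha>)) absolutely_integrable_on {0..r}"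
    by (intro nonnegative_absolutely_integrable_1) (auto simp: integrable_on_def)
  moreover have "(\<lambda>\<tau>. indicator {0..r} \<tau> *\<^sub>R (\<tau> powr (-\<alpha>))) \<in> borel_measurable lborel"
    by measurable
  ultimately show si: "set_integrable lborel {0..r} (\<lambda>\<tau>. \<tau> powr (-\<alpha>))"
    unfolding set_integrable_def by (simp add: integrable_completion)
  have "(LINT \<tau>:{0..r}|lborel. \<tau> powr (-\<alpha>)) = integral {0..r} (\<lambda>x. x powr (-\<alpha>))"
    using set_borel_integral_eq_integral(2)[OF si] .
  also have "\<dots> = r powr (1-\<alpha>) / (1-\<alpha>)" using integral_unique[OF hi] by simp
  finally show "(LINT \<tau>:{0..r}|lborel. \<tau> powr (-\<alpha>)) = r powr (1-\<alpha>) / (1-\<alpha>)" .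
qed

lemma J_int_bound:
  fixes \<alpha> r K :: real and F :: "real \<Rightarrow> real"
  assumes a: "0 < \<alpha>" "\<alpha> < 1" and r: "r \<ge> 0" and K: "K \<ge> 0"
    and b: "\<And>\<tau>. \<tau> \<in> {0<..<r} \<Longrightarrow> \<bar>F \<tau>\<bar> \<le> K * \<tau> powr (-\<alpha>)"
  shows "\<bar>LINT \<tau>:{0<..<r}|lborel. F \<tau>\<bar> \<le> K * (r powr (1-\<alpha>) / (1-\<alpha>))"
proof (cases "set_integrable lborel {0<..<r} F")
  case True
  have si: "set_integrable lborel {0..r} (\<lambda>\<tau>. K * \<tau> powr (-\<alpha>))"
    using powr_int0(1)[OF a r] by (rule set_integrable_mult_right)
  have "norm (LINT \<tau>:{0<..<r}|lborel. F \<tau>) \<le> (LINT \<tau>:{0..r}|lborel. K * \<tau> powr (-\<alpha>))"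
    unfolding set_lebesgue_integral_def
    apply (rule Bochner_Integration.integral_norm_bound_integral)
    using True si apply (simp_all add: set_integrable_def)
    subgoal for x using b[of x] K by (auto simp: indicator_def)
    done
  also have "\<dots> = K * (r powr (1-\<alpha>) / (1-\<alpha>))"
    using powr_int0(2)[OF a r] by (simp add: set_integral_mult_right)
  finally show ?thesis by simp
next
  case False
  hence "(LINT \<tau>:{0<..<r}|lborel. F \<tau>) = 0"
    unfolding set_lebesgue_integral_def set_integrable_def by (simp add: not_integrable_integral_eq)
  moreover have "0 \<le> K * (r powr (1-\<alpha>) / (1-\<alpha>))" using K a by simp
  ultimately show ?thesis by simp
qed


lemma C1_quad:
  fixes A B s :: real and y :: "real^'d"
  shows "C1_test T (\<lambda>t' x'. A*((x'-y)\<bullet>(x'-y)) + B*(t'-s)^2) (\<lambda>t' x'. 2*B*(t'-s))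
           (\<lambda>t' x'. (2*A) *\<^sub>R (x'-y))"
  unfolding C1_test_def
proof (intro conjI ballI allI)
  show "continuous_on ({0..T} \<times> UNIV) (\<lambda>p. A*((snd p-y)\<bullet>(snd p-y)) + B*(fst p-s)^2)"
    by (intro continuous_intros)
  show "continuous_on ({0<..T} \<times> UNIV) (\<lambda>p. 2*B*(fst p - s))"
    by (intro continuous_intros)
  show "continuous_on ({0<..T} \<times> UNIV) (\<lambda>p. (2*A) *\<^sub>R (snd p - y))"
    by (intro continuous_intros)
  fix x :: "real^'d"
  have "set_integrable lborel {0..T} (\<lambda>t. 2*B*(t-s))"
    by (intro borel_integrable_atLeastAtMost' continuous_intros)
  then show "set_integrable lborel {0<..<T} (\<lambda>t. 2*B*(t-s))"
    by (rule set_integrable_subset) auto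
  fix t assume "t \<in> {0<..T}"
  show "((\<lambda>p. A*((snd p-y)\<bullet>(snd p-y)) + B*(fst p-s)^2) has_derivative
         (\<lambda>h. fst h * (2*B*(t-s)) + ((2*A) *\<^sub>R (x-y)) \<bullet> snd h)) (at (t, x) within {0<..T} \<times> UNIV)"
    apply (rule derivative_eq_intros refl | simp)+
    apply (simp add: algebra_simps inner_commute fun_eq_iff)
    done
qed


lemma lsc_neg_usc: "lsc_on S f \<Longrightarrow> usc_on S (\<lambda>p. - f p)"
  unfolding lsc_on_def usc_on_def
proof (intro ballI allI impI)
  fix p e assume "\<forall>p\<in>S. \<forall>e>0. \<forall>\<^sub>F q in at p within S. f p - e < f q" "p \<in> S" "(e::real) > 0"
  hence "\<forall>\<^sub>F q in at p within S. f p - e < f q" by blast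
  thus "\<forall>\<^sub>F q in at p within S. - f q < - f p + e" by (rule eventually_mono) simp
qed

lemma usc_slice_meas:
  fixes u :: "real \<Rightarrow> real^'d \<Rightarrow> real"
  assumes usc: "usc_on ({0..T} \<times> UNIV) (\<lambda>p. u (fst p) (snd p))"
    and ab: "a \<le> b" "0 \<le> t - b" "t - a \<le> T"
  shows "\<exists>G\<in>borel_measurable lborel. \<forall>\<tau>\<in>{a..b}. G \<tau> = u (t - \<tau>) x"
proof -
  define cl where "cl = (\<lambda>\<tau>::real. max a (min b \<tau>))"
  define G where "G = (\<lambda>\<tau>. u (t - cl \<tau>) x)"
  have cl_in: "(t - cl \<tau>, x) \<in> {0..T} \<times> UNIV" for \<tau> using ab by (auto simp: cl_def)
  have cl_lip: "\<bar>cl \<tau> - cl \<tau>'\<bar> \<le> \<bar>\<tau> - \<tau>'\<bar>" for \<tau> \<tau>' by (auto simp: cl_def)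
  have op: "open {\<tau>. G \<tau> < c}" for c
    unfolding open_dist
  proof (intro ballI)
    fix \<tau>0 assume "\<tau>0 \<in> {\<tau>. G \<tau> < c}"
    hence "c - G \<tau>0 > 0" by simp
    from usc_metricD[OF usc cl_in[of \<tau>0] this] obtain d where d: "d > 0"
      "\<forall>q\<in>{0..T} \<times> UNIV. dist q (t - cl \<tau>0, x) < d \<longrightarrow> u (fst q) (snd q) < u (t - cl \<tau>0) x + (c - G \<tau>0)"
      by auto
    show "\<exists>e>0. \<forall>y. dist y \<tau>0 < e \<longrightarrow> y \<in> {\<tau>. G \<tau> < c}"
    proof (intro exI[of _ d] conjI allI impI)
      fix y assume "dist y \<tau>0 < d"
      hence "dist (t - cl y, x) (t - cl \<tau>0, x) < d"
        using cl_lip[of y \<tau>0] by (simp add: dist_Pair_Pair dist_real_def)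
      with d(2) cl_in[of y] have "u (t - cl y) x < u (t - cl \<tau>0) x + (c - G \<tau>0)" by force
      thus "y \<in> {\<tau>. G \<tau> < c}" by (simp add: G_def)
    qed (rule d(1))
  qed
  have "G \<in> borel_measurable lborel"
    unfolding borel_measurable_iff_less using op by (auto intro: borel_open)
  moreover have "\<forall>\<tau>\<in>{a..b}. G \<tau> = u (t - \<tau>) x" by (auto simp: G_def cl_def)
  ultimately show ?thesis by blast
qed

definition posI :: "real set \<Rightarrow> (real \<Rightarrow> real) \<Rightarrow> ennreal" where
  "posI S g = (\<integral>\<^sup>+ \<tau>\<in>S. ennreal (g \<tau>) \<partial>lborel)"

lemma eint_posI: "eint S g = enn2ereal (posI S g) - enn2ereal (posI S (\<lambda>\<tau>. - g \<tau>))"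
  unfolding eint_def posI_def by simp

lemma posI_mono: "(\<And>\<tau>. \<tau> \<in> S \<Longrightarrow> g \<tau> \<le> h \<tau>) \<Longrightarrow> posI S g \<le> posI S h"
  unfolding posI_def by (intro nn_integral_mono) (auto simp: indicator_def ennreal_leI)

lemma posI_mono_set: "S \<subseteq> S' \<Longrightarrow> posI S g \<le> posI S' g"
  unfolding posI_def by (intro nn_integral_mono) (auto simp: indicator_def)

lemma eint_mono: assumes h: "\<And>\<tau>. \<tau> \<in> S \<Longrightarrow> g \<tau> \<le> h \<tau>" shows "eint S g \<le> eint S h"
proof -
  have "posI S g \<le> posI S h" by (rule posI_mono) (use h in auto)
  moreover have "posI S (\<lambda>\<tau>. - h \<tau>) \<le> posI S (\<lambda>\<tau>. - g \<tau>)" by (rule posI_mono) (use h in auto)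
  ultimately show ?thesis unfolding eint_posI
    by (intro ereal_minus_mono) (simp_all add: less_eq_ennreal.rep_eq)
qed

lemma posI_split:
  assumes G: "G \<in> borel_measurable lborel" "\<forall>\<tau>\<in>{a..b}. G \<tau> = g \<tau>"
    and C: "\<forall>\<tau>\<in>{b..b'}. g \<tau> \<le> C" "C \<ge> 0" and ab: "a \<le> b" "b \<le> b'"
  shows "posI {a..b'} g \<le> posI {a..b} g + ennreal (C * (b' - b))"
proof -
  have "posI {a..b'} g \<le> (\<integral>\<^sup>+ \<tau>. ennreal (G \<tau>) * indicator {a..b} \<tau> + ennreal C * indicator {b..b'} \<tau> \<partial>lborel)"
    unfolding posI_def
  proof (intro nn_integral_mono)
    fix \<tau> show "ennreal (g \<tau>) * indicator {a..b'} \<tau> \<le> ennreal (G \<tau>) * indicator {a..b} \<tau> + ennreal C * indicator {b..b'} \<tau>"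
      using G C by (cases "\<tau> \<in> {a..b}"; cases "\<tau> \<in> {b..b'}") (auto simp: indicator_def ennreal_leI)
  qed
  also have "\<dots> = (\<integral>\<^sup>+ \<tau>. ennreal (G \<tau>) * indicator {a..b} \<tau> \<partial>lborel) + (\<integral>\<^sup>+ \<tau>. ennreal C * indicator {b..b'} \<tau> \<partial>lborel)"
    using G by (intro nn_integral_add) auto
  also have "(\<integral>\<^sup>+ \<tau>. ennreal (G \<tau>) * indicator {a..b} \<tau> \<partial>lborel) = posI {a..b} g"
    unfolding posI_def using G by (intro nn_integral_cong) (auto simp: indicator_def)
  also have "(\<integral>\<^sup>+ \<tau>. ennreal C * indicator {b..b'} \<tau> \<partial>lborel) = ennreal (C * (b' - b))"
    using ab C by (simp add: nn_integral_cmult_indicator ennreal_mult)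
  finally show ?thesis .
qed

lemma eint_split_lower:
  assumes G: "G \<in> borel_measurable lborel" "\<forall>\<tau>\<in>{a..b}. G \<tau> = g \<tau>"
    and C: "\<forall>\<tau>\<in>{b..b'}. - C \<le> g \<tau>" "C \<ge> 0" and ab: "a \<le> b" "b \<le> b'"
  shows "eint {a..b} g - ereal (C * (b' - b)) \<le> eint {a..b'} g"
proof -
  have n: "posI {a..b'} (\<lambda>\<tau>. - g \<tau>) \<le> posI {a..b} (\<lambda>\<tau>. - g \<tau>) + ennreal (C * (b' - b))"
    by (rule posI_split[of "\<lambda>\<tau>. - G \<tau>"]) (use G C ab in auto)
  have p: "posI {a..b} g \<le> posI {a..b'} g" using ab by (intro posI_mono_set) auto
  define P where "P = enn2ereal (posI {a..b} g)"
  define P' where "P' = enn2ereal (posI {a..b'} g)"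
  define N where "N = enn2ereal (posI {a..b} (\<lambda>\<tau>. - g \<tau>))"
  define N' where "N' = enn2ereal (posI {a..b'} (\<lambda>\<tau>. - g \<tau>))"
  have c0: "C * (b' - b) \<ge> 0" using C ab by simp
  have "N' \<le> N + ereal (C * (b' - b))" using n c0 unfolding N_def N'_def
    by (metis enn2ereal_ennreal enn2ereal_nonneg less_eq_ennreal.rep_eq plus_ennreal.rep_eq)
  moreover have "P \<le> P'" using p unfolding P_def P'_def by (simp add: less_eq_ennreal.rep_eq)
  moreover have "P \<ge> 0" "N \<ge> 0" unfolding P_def N_def by auto
  ultimately have "P - N - ereal (C * (b' - b)) \<le> P' - N'"
    by (cases P; cases P'; cases N; cases N') auto
  thus ?thesis unfolding eint_posI P_def P'_def N_def N'_def .
qed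

lemma eint_split_upper:
  assumes G: "G \<in> borel_measurable lborel" "\<forall>\<tau>\<in>{a..b}. G \<tau> = g \<tau>"
    and C: "\<forall>\<tau>\<in>{b..b'}. g \<tau> \<le> C" "C \<ge> 0" and ab: "a \<le> b" "b \<le> b'"
  shows "eint {a..b'} g \<le> eint {a..b} g + ereal (C * (b' - b))"
proof -
  have n: "posI {a..b'} g \<le> posI {a..b} g + ennreal (C * (b' - b))"
    by (rule posI_split[OF G C ab])
  have p: "posI {a..b} (\<lambda>\<tau>. - g \<tau>) \<le> posI {a..b'} (\<lambda>\<tau>. - g \<tau>)" using ab by (intro posI_mono_set) auto
  define P where "P = enn2ereal (posI {a..b} (\<lambda>\<tau>. - g \<tau>))"
  define P' where "P' = enn2ereal (posI {a..b'} (\<lambda>\<tau>. - g \<tau>))"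
  define N where "N = enn2ereal (posI {a..b} g)"
  define N' where "N' = enn2ereal (posI {a..b'} g)"
  have c0: "C * (b' - b) \<ge> 0" using C ab by simp
  have "N' \<le> N + ereal (C * (b' - b))" using n c0 unfolding N_def N'_def
    by (metis enn2ereal_ennreal enn2ereal_nonneg less_eq_ennreal.rep_eq plus_ennreal.rep_eq)
  moreover have "P \<le> P'" using p unfolding P_def P'_def by (simp add: less_eq_ennreal.rep_eq)
  moreover have "P \<ge> 0" "N \<ge> 0" unfolding P_def N_def by auto
  ultimately have "N' - P' \<le> N - P + ereal (C * (b' - b))"
    by (cases P; cases P'; cases N; cases N') auto
  thus ?thesis unfolding eint_posI P_def P'_def N_def N'_def .
qed

lemma ereal_combine:
  fixes Ju Jv Bu Bv Hu Hv c D :: real and Eu Ev :: ereal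
  assumes S1: "ereal Ju + (ereal Bu + ereal c * Eu) + ereal Hu \<le> 0"
    and S2: "ereal Jv + (ereal Bv + ereal c * Ev) + ereal Hv \<ge> 0"
    and E: "Ev - ereal D \<le> Eu" and c: "c > 0"
  shows "Ju - Jv + Bu - Bv - c*D + Hu - Hv \<le> 0"
proof -
  have "Eu \<noteq> \<infinity>" using S1 c by auto
  moreover have "Ev \<noteq> -\<infinity>" using S2 c by auto
  ultimately obtain eu ev where eu: "Eu = ereal eu" and ev: "Ev = ereal ev"
    using E by (cases Eu; cases Ev) auto
  have "ev \<le> D + eu" using E unfolding eu ev by simp
  hence "c * ev \<le> c * (D + eu)" using c by (intro mult_left_mono) auto
  with S1 S2 show ?thesis unfolding eu ev using c
    by (simp add: algebra_simps)
qed


lemma E_compare: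
  fixes \<alpha> T r Mu mv t s :: real and u v :: "real \<Rightarrow> real^'d \<Rightarrow> real" and x y :: "real^'d"
  assumes alpha: "0<\<alpha>" "\<alpha><1"
    and uusc: "usc_on ({0..T} \<times> UNIV) (\<lambda>p. u (fst p) (snd p))"
    and vlsc: "lsc_on ({0..T} \<times> UNIV) (\<lambda>p. v (fst p) (snd p))"
    and Mu: "\<forall>t\<in>{0..T}. \<forall>x. u t x \<le> Mu" and mv: "\<forall>t\<in>{0..T}. \<forall>x. mv \<le> v t x"
    and ts: "0 < t" "t \<le> T" "0 < s" "s \<le> T"
    and r: "0 < r" "r \<le> t" "r \<le> s"
    and UV: "v s y \<le> u t x"
    and shift: "\<forall>\<tau>\<in>{r..min t s}. u (t-\<tau>) x - v (s-\<tau>) y \<le> u t x - v s y"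
  shows "eint {r..s} (\<lambda>\<tau>. (v s y - v (s-\<tau>) y) * \<tau> powr (-\<alpha>-1))
           - ereal ((Mu - mv) * (min t s) powr (-\<alpha>-1) * \<bar>t-s\<bar>)
         \<le> eint {r..t} (\<lambda>\<tau>. (u t x - u (t-\<tau>) x) * \<tau> powr (-\<alpha>-1))"
proof -
  define fu where "fu = (\<lambda>\<tau>. (u t x - u (t-\<tau>) x) * \<tau> powr (-\<alpha>-1))"
  define fv where "fv = (\<lambda>\<tau>. (v s y - v (s-\<tau>) y) * \<tau> powr (-\<alpha>-1))"
  have pw: "\<tau> powr (-\<alpha>-1) > 0" if "\<tau> > 0" for \<tau> :: real using that by simp
  have pwm: "\<tau> powr (-\<alpha>-1) \<le> m powr (-\<alpha>-1)" if "0 < m" "m \<le> \<tau>" for \<tau> m :: real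
    using that alpha by (intro powr_mono2') auto
  have fvu: "fv \<tau> \<le> fu \<tau>" if "\<tau> \<in> {r..min t s}" for \<tau>
  proof -
    have "v s y - v (s-\<tau>) y \<le> u t x - u (t-\<tau>) x" using shift that by force
    moreover have "\<tau> > 0" using that r by auto
    ultimately show ?thesis unfolding fu_def fv_def using pw[of \<tau>] by (intro mult_right_mono) auto
  qed
  have Ut: "u t x \<le> Mu" using Mu ts by auto
  have Vs: "mv \<le> v s y" using mv ts by auto
  show ?thesis
  proof (cases "s \<le> t")
    case True
    obtain G where G: "G \<in> borel_measurable lborel" "\<forall>\<tau>\<in>{r..s}. G \<tau> = u (t - \<tau>) x"
      using usc_slice_meas[OF uusc, of r s t x] True r ts by auto
    have Gm: "(\<lambda>\<tau>. (u t x - G \<tau>) * \<tau> powr (-\<alpha>-1)) \<in> borel_measurable lborel"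
      by (intro borel_measurable_times borel_measurable_diff borel_measurable_const powr_real_measurable G(1)) auto
    have lb: "\<forall>\<tau>\<in>{s..t}. - ((Mu - mv) * s powr (-\<alpha>-1)) \<le> fu \<tau>"
    proof
      fix \<tau> assume \<tau>: "\<tau> \<in> {s..t}"
      have "u (t-\<tau>) x \<le> Mu" using Mu \<tau> ts by auto
      hence "(u t x - Mu) * \<tau> powr (-\<alpha>-1) \<le> fu \<tau>" unfolding fu_def
        using pw[of \<tau>] \<tau> ts by (intro mult_right_mono) auto
      moreover have "(Mu - u t x) * \<tau> powr (-\<alpha>-1) \<le> (Mu - mv) * s powr (-\<alpha>-1)"
        using Ut UV Vs pwm[of s \<tau>] \<tau> ts pw[of s] by (intro mult_mono) auto
      ultimately show "- ((Mu - mv) * s powr (-\<alpha>-1)) \<le> fu \<tau>" by (simp add: algebra_simps)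
    qed
    have C0: "(Mu - mv) * s powr (-\<alpha>-1) \<ge> 0" using Ut UV Vs by simp
    have "eint {r..s} fu - ereal ((Mu - mv) * s powr (-\<alpha>-1) * (t - s)) \<le> eint {r..t} fu"
      by (rule eint_split_lower[OF Gm _ lb C0]) (use G r True in \<open>auto simp: fu_def\<close>)
    moreover have "eint {r..s} fv \<le> eint {r..s} fu" by (rule eint_mono) (use fvu True in auto)
    ultimately have "eint {r..s} fv - ereal ((Mu - mv) * s powr (-\<alpha>-1) * (t - s)) \<le> eint {r..t} fu"
      using ereal_minus_mono[of "eint {r..s} fv" "eint {r..s} fu" "ereal ((Mu - mv) * s powr (-\<alpha>-1) * (t - s))" "ereal ((Mu - mv) * s powr (-\<alpha>-1) * (t - s))"]
      by (meson order_refl order_trans)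
    moreover have "min t s = s" "\<bar>t - s\<bar> = t - s" using True by auto
    ultimately show ?thesis unfolding fu_def fv_def by simp
  next
    case False
    have nvlsc: "usc_on ({0..T} \<times> UNIV) (\<lambda>p. - v (fst p) (snd p))" using lsc_neg_usc[OF vlsc] .
    obtain G where G: "G \<in> borel_measurable lborel" "\<forall>\<tau>\<in>{r..t}. G \<tau> = - v (s - \<tau>) y"
      using usc_slice_meas[of T "\<lambda>t x. - v t x", OF nvlsc, of r t s y] False r ts by auto
    have Gm: "(\<lambda>\<tau>. (v s y + G \<tau>) * \<tau> powr (-\<alpha>-1)) \<in> borel_measurable lborel"
      by (intro borel_measurable_times borel_measurable_add borel_measurable_const powr_real_measurable G(1)) auto
    have ub: "\<forall>\<tau>\<in>{t..s}. fv \<tau> \<le> (Mu - mv) * t powr (-\<alpha>-1)"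
    proof
      fix \<tau> assume \<tau>: "\<tau> \<in> {t..s}"
      have "mv \<le> v (s-\<tau>) y" using mv \<tau> ts by auto
      hence "fv \<tau> \<le> (v s y - mv) * \<tau> powr (-\<alpha>-1)" unfolding fv_def
        using pw[of \<tau>] \<tau> ts by (intro mult_right_mono) auto
      moreover have "(v s y - mv) * \<tau> powr (-\<alpha>-1) \<le> (Mu - mv) * t powr (-\<alpha>-1)"
        using Ut UV Vs pwm[of t \<tau>] \<tau> ts pw[of t] by (intro mult_mono) auto
      ultimately show "fv \<tau> \<le> (Mu - mv) * t powr (-\<alpha>-1)" by simp
    qed
    have C0: "(Mu - mv) * t powr (-\<alpha>-1) \<ge> 0" using Ut UV Vs by simp
    have "eint {r..s} fv \<le> eint {r..t} fv + ereal ((Mu - mv) * t powr (-\<alpha>-1) * (s - t))"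
      by (rule eint_split_upper[OF Gm _ ub C0]) (use G r False in \<open>auto simp: fv_def\<close>)
    moreover have "eint {r..t} fv \<le> eint {r..t} fu" by (rule eint_mono) (use fvu False in auto)
    ultimately have "eint {r..s} fv \<le> eint {r..t} fu + ereal ((Mu - mv) * t powr (-\<alpha>-1) * (s - t))"
      by (meson add_right_mono order_trans)
    hence "eint {r..s} fv - ereal ((Mu - mv) * t powr (-\<alpha>-1) * (s - t)) \<le> eint {r..t} fu"
      by (simp add: ereal_minus_le_iff add.commute)
    moreover have "min t s = t" "\<bar>t - s\<bar> = s - t" using False by auto
    ultimately show ?thesis unfolding fu_def fv_def by simp
  qed
qed


lemma core:
  fixes \<alpha> T \<epsilon> \<delta> r Mu mv t s :: real and H :: "real \<Rightarrow> real^'d \<Rightarrow> real \<Rightarrow> real^'d \<Rightarrow> real"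
    and u v :: "real \<Rightarrow> real^'d \<Rightarrow> real" and x y :: "real^'d"
  assumes alpha: "0<\<alpha>" "\<alpha><1"
    and sub: "visc_sub \<alpha> T H u" and super: "visc_super \<alpha> T H v"
    and Mu: "\<forall>t\<in>{0..T}. \<forall>x. u t x \<le> Mu" and mv: "\<forall>t\<in>{0..T}. \<forall>x. mv \<le> v t x"
    and ts: "0 < t" "t \<le> T" "0 < s" "s \<le> T" and ed: "0 < \<epsilon>" "0 < \<delta>"
    and r: "0 < r" "r \<le> t" "r \<le> s"
    and UV: "v s y \<le> u t x"
    and maxG: "\<forall>t'\<in>{0..T}. \<forall>x'. \<forall>s'\<in>{0..T}. \<forall>y'.
       u t' x' - v s' y' - ((1/(2*\<epsilon>))*((x'-y')\<bullet>(x'-y')) + (1/(2*\<delta>))*(t'-s')^2)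
       \<le> u t x - v s y - ((1/(2*\<epsilon>))*((x-y)\<bullet>(x-y)) + (1/(2*\<delta>))*(t-s)^2)"
  shows "J_op \<alpha> r (\<lambda>t' x'. (1/(2*\<epsilon>))*((x'-y)\<bullet>(x'-y)) + (1/(2*\<delta>))*(t'-s)^2) t x
       - J_op \<alpha> r (\<lambda>s' y'. (-1/(2*\<epsilon>))*((y'-x)\<bullet>(y'-x)) + (-1/(2*\<delta>))*(s'-t)^2) s y
       + (u t x - u 0 x)/(t powr \<alpha> * Gamma(1-\<alpha>)) - (v s y - v 0 y)/(s powr \<alpha> * Gamma(1-\<alpha>))
       - \<alpha>/Gamma(1-\<alpha>) * ((Mu - mv) * (min t s) powr (-\<alpha>-1) * \<bar>t-s\<bar>)
       + H t x (u t x) ((1/\<epsilon>) *\<^sub>R (x-y)) - H s y (v s y) ((1/\<epsilon>) *\<^sub>R (x-y)) \<le> 0"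
proof -
  have maxG': "\<And>t' x' s' y'. t' \<in> {0..T} \<Longrightarrow> s' \<in> {0..T} \<Longrightarrow>
       u t' x' - v s' y' - ((1/(2*\<epsilon>))*((x'-y')\<bullet>(x'-y')) + (1/(2*\<delta>))*(t'-s')^2)
       \<le> u t x - v s y - ((1/(2*\<epsilon>))*((x-y)\<bullet>(x-y)) + (1/(2*\<delta>))*(t-s)^2)"
    using maxG by blast
  define \<phi> where "\<phi> = (\<lambda>t' x'. (1/(2*\<epsilon>))*((x'-y)\<bullet>(x'-y)) + (1/(2*\<delta>))*(t'-s)^2)"
  define \<psi> where "\<psi> = (\<lambda>s' y'. (-1/(2*\<epsilon>))*((y'-x)\<bullet>(y'-x)) + (-1/(2*\<delta>))*(s'-t)^2)"
  define p where "p = (1/\<epsilon>) *\<^sub>R (x-y)"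
  have C1u: "C1_test T \<phi> (\<lambda>t' x'. 2*(1/(2*\<delta>))*(t'-s)) (\<lambda>t' x'. (2*(1/(2*\<epsilon>))) *\<^sub>R (x'-y))"
    unfolding \<phi>_def by (rule C1_quad)
  have C1v: "C1_test T \<psi> (\<lambda>t' x'. 2*(-1/(2*\<delta>))*(t'-t)) (\<lambda>t' x'. (2*(-1/(2*\<epsilon>))) *\<^sub>R (x'-x))"
    unfolding \<psi>_def by (rule C1_quad)
  have Du: "(2*(1/(2*\<epsilon>))) *\<^sub>R (x-y) = p" unfolding p_def using ed by simp
  have Dv: "(2*(-1/(2*\<epsilon>))) *\<^sub>R (y-x) = p" unfolding p_def using ed by (simp add: algebra_simps)
  have usc: "usc_on ({0..T} \<times> UNIV) (\<lambda>p. u (fst p) (snd p))" using sub unfolding visc_sub_def by blast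
  have lsc: "lsc_on ({0..T} \<times> UNIV) (\<lambda>p. v (fst p) (snd p))" using super unfolding visc_super_def by blast
  have maxu: "\<forall>s'\<in>{t-r..t}. \<forall>y'\<in>cball x 1. u s' y' - \<phi> s' y' \<le> u t x - \<phi> t x"
  proof (intro ballI)
    fix s' y' assume "s' \<in> {t-r..t}" "y' \<in> cball x 1"
    hence "s' \<in> {0..T}" using r ts by auto
    hence "u s' y' - v s y - ((1/(2*\<epsilon>))*((y'-y)\<bullet>(y'-y)) + (1/(2*\<delta>))*(s'-s)^2)
       \<le> u t x - v s y - ((1/(2*\<epsilon>))*((x-y)\<bullet>(x-y)) + (1/(2*\<delta>))*(t-s)^2)"
      using maxG'[of s' s y' y] ts by simp
    thus "u s' y' - \<phi> s' y' \<le> u t x - \<phi> t x" unfolding \<phi>_def by linarith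
  qed
  have maxv: "\<forall>s'\<in>{s-r..s}. \<forall>y'\<in>cball y 1. v s y - \<psi> s y \<le> v s' y' - \<psi> s' y'"
  proof (intro ballI)
    fix s' y' assume "s' \<in> {s-r..s}" "y' \<in> cball y 1"
    hence "s' \<in> {0..T}" using r ts by auto
    hence "u t x - v s' y' - ((1/(2*\<epsilon>))*((x-y')\<bullet>(x-y')) + (1/(2*\<delta>))*(t-s')^2)
       \<le> u t x - v s y - ((1/(2*\<epsilon>))*((x-y)\<bullet>(x-y)) + (1/(2*\<delta>))*(t-s)^2)"
      using maxG'[of t s' x y'] ts by simp
    moreover have "(x-y')\<bullet>(x-y') = (y'-x)\<bullet>(y'-x)" "(x-y)\<bullet>(x-y) = (y-x)\<bullet>(y-x)"
      by (simp_all add: inner_diff_left inner_diff_right inner_commute)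
    moreover have "(t-s')^2 = (s'-t)^2" "(t-s)^2 = (s-t)^2" by (simp_all add: power2_commute)
    ultimately show "v s y - \<psi> s y \<le> v s' y' - \<psi> s' y'" unfolding \<psi>_def by simp
  qed
  have S1: "ereal (J_op \<alpha> r \<phi> t x) + K_op \<alpha> r u t x + ereal (H t x (u t x) p) \<le> 0"
    using sub[unfolded visc_sub_def, THEN conjunct2, rule_format,
        of "t-r" t 1 \<phi> "\<lambda>t' x'. 2*(1/(2*\<delta>))*(t'-s)" "\<lambda>t' x'. (2*(1/(2*\<epsilon>))) *\<^sub>R (x'-y)" t x x]
      r ts C1u maxu Du by simp
  have S2: "ereal (J_op \<alpha> r \<psi> s y) + K_op \<alpha> r v s y + ereal (H s y (v s y) p) \<ge> 0"
    using super[unfolded visc_super_def, THEN conjunct2, rule_format,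
        of "s-r" s 1 \<psi> "\<lambda>t' x'. 2*(-1/(2*\<delta>))*(t'-t)" "\<lambda>t' x'. (2*(-1/(2*\<epsilon>))) *\<^sub>R (x'-x)" s y y]
      r ts C1v maxv Dv by simp
  have shift: "\<forall>\<tau>\<in>{r..min t s}. u (t-\<tau>) x - v (s-\<tau>) y \<le> u t x - v s y"
  proof
    fix \<tau> assume "\<tau> \<in> {r..min t s}"
    hence "t - \<tau> \<in> {0..T}" "s - \<tau> \<in> {0..T}" using r ts by auto
    hence "u (t-\<tau>) x - v (s-\<tau>) y - ((1/(2*\<epsilon>))*((x-y)\<bullet>(x-y)) + (1/(2*\<delta>))*((t-\<tau>)-(s-\<tau>))^2)
       \<le> u t x - v s y - ((1/(2*\<epsilon>))*((x-y)\<bullet>(x-y)) + (1/(2*\<delta>))*(t-s)^2)"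
      using maxG'[of "t-\<tau>" "s-\<tau>" x y] by simp
    thus "u (t-\<tau>) x - v (s-\<tau>) y \<le> u t x - v s y" by simp
  qed
  have E: "eint {r..s} (\<lambda>\<tau>. (v s y - v (s-\<tau>) y) * \<tau> powr (-\<alpha>-1))
           - ereal ((Mu - mv) * (min t s) powr (-\<alpha>-1) * \<bar>t-s\<bar>)
         \<le> eint {r..t} (\<lambda>\<tau>. (u t x - u (t-\<tau>) x) * \<tau> powr (-\<alpha>-1))"
    by (rule E_compare[OF alpha usc lsc Mu mv ts r UV shift])
  have G: "Gamma (1-\<alpha>) > 0" using alpha by (intro Gamma_real_pos) simp
  have c: "\<alpha> / Gamma (1-\<alpha>) > 0" using alpha G by simp
  from ereal_combine[OF S1[unfolded K_op_def] S2[unfolded K_op_def] E c]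
  show ?thesis unfolding \<phi>_def \<psi>_def p_def by simp
qed


lemma J_quad_bound:
  fixes \<alpha> r A B s t :: real and y x :: "real^'d"
  assumes alpha: "0<\<alpha>" "\<alpha><1" and r: "0 < r"
  shows "\<bar>J_op \<alpha> r (\<lambda>t' x'. A*((x'-y)\<bullet>(x'-y)) + B*(t'-s)^2) t x\<bar>
     \<le> \<alpha>/Gamma(1-\<alpha>) * (\<bar>B\<bar>*(2*\<bar>t-s\<bar>+r) * (r powr (1-\<alpha>) / (1-\<alpha>)))"
proof -
  have G: "Gamma (1-\<alpha>) > 0" using alpha by (intro Gamma_real_pos) simp
  have c: "\<alpha> / Gamma (1-\<alpha>) > 0" using alpha G by simp
  have K: "\<bar>B\<bar>*(2*\<bar>t-s\<bar>+r) \<ge> 0" using r by simp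
  have b: "\<bar>(B*(t-s)^2 - B*(t-\<tau>-s)^2) * \<tau> powr (-\<alpha>-1)\<bar> \<le> \<bar>B\<bar>*(2*\<bar>t-s\<bar>+r) * \<tau> powr (-\<alpha>)"
    if \<tau>: "\<tau> \<in> {0<..<r}" for \<tau>
  proof -
    have tp: "\<tau> > 0" using \<tau> by simp
    have e1: "B*(t-s)^2 - B*(t-\<tau>-s)^2 = B * (2*(t-s) - \<tau>) * \<tau>" by (simp add: power2_eq_square algebra_simps)
    have e2: "\<tau> * \<tau> powr (-\<alpha>-1) = \<tau> powr (-\<alpha>)" using tp by (simp add: powr_mult_base)
    have "\<bar>2*(t-s) - \<tau>\<bar> \<le> 2*\<bar>t-s\<bar>+r" using \<tau> abs_ge_self[of "t-s"] abs_ge_minus_self[of "t-s"] by (simp add: abs_le_iff)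
    hence "\<bar>B\<bar> * \<bar>2*(t-s) - \<tau>\<bar> \<le> \<bar>B\<bar>*(2*\<bar>t-s\<bar>+r)" by (intro mult_left_mono) auto
    hence "\<bar>B\<bar> * \<bar>2*(t-s) - \<tau>\<bar> * \<tau> powr (-\<alpha>) \<le> \<bar>B\<bar>*(2*\<bar>t-s\<bar>+r) * \<tau> powr (-\<alpha>)"
      by (intro mult_right_mono) auto
    moreover have "\<bar>(B*(t-s)^2 - B*(t-\<tau>-s)^2) * \<tau> powr (-\<alpha>-1)\<bar> = \<bar>B\<bar> * \<bar>2*(t-s) - \<tau>\<bar> * \<tau> powr (-\<alpha>)"
      unfolding e1 using tp e2[symmetric] by (simp add: abs_mult)
    ultimately show ?thesis by simp
  qed
  have "\<bar>LINT \<tau>:{0<..<r}|lborel. (B*(t-s)^2 - B*(t-\<tau>-s)^2) * \<tau> powr (-\<alpha>-1)\<bar>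
      \<le> \<bar>B\<bar>*(2*\<bar>t-s\<bar>+r) * (r powr (1-\<alpha>) / (1-\<alpha>))"
    by (rule J_int_bound[OF alpha _ K b]) (use r in auto)
  hence "\<alpha>/Gamma(1-\<alpha>) * \<bar>LINT \<tau>:{0<..<r}|lborel. (B*(t-s)^2 - B*(t-\<tau>-s)^2) * \<tau> powr (-\<alpha>-1)\<bar>
      \<le> \<alpha>/Gamma(1-\<alpha>) * (\<bar>B\<bar>*(2*\<bar>t-s\<bar>+r) * (r powr (1-\<alpha>) / (1-\<alpha>)))"
    using c by (intro mult_left_mono) auto
  thus ?thesis unfolding J_op_def using c alpha G by (simp add: abs_mult abs_of_pos)
qed


lemma B_bound:
  fixes U V u0 v0 t s T \<alpha> \<Gamma> \<theta> Cabs \<eta> tb :: real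
  assumes ts: "0 < t" "t \<le> T" "0 < s" "0 < tb" "tb/2 \<le> t" "tb/2 \<le> s"
    and a: "0 < \<alpha>" and G: "0 < \<Gamma>" and UV: "\<theta> \<le> U - V" "0 < \<theta>"
    and Vb: "\<bar>V\<bar> \<le> Cabs" and uv0: "u0 - v0 \<le> \<eta>" "0 \<le> \<eta>" and u0: "u0 \<le> Cabs" and v0: "- Cabs \<le> v0"
  shows "(\<theta> * T powr (-\<alpha>) - 2*Cabs*\<bar>t powr (-\<alpha>) - s powr (-\<alpha>)\<bar> - \<eta> * (tb/2) powr (-\<alpha>)) / \<Gamma>
     \<le> (U - u0)/(t powr \<alpha> * \<Gamma>) - (V - v0)/(s powr \<alpha> * \<Gamma>)"
proof -
  define a where "a = t powr (-\<alpha>)"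
  define b where "b = s powr (-\<alpha>)"
  define m where "m = (tb/2) powr (-\<alpha>)"
  have ap: "a > 0" "b > 0" unfolding a_def b_def using ts by auto
  have aT: "T powr (-\<alpha>) \<le> a" unfolding a_def using ts a by (intro powr_mono2') auto
  have am: "a \<le> m" "b \<le> m" unfolding a_def b_def m_def using ts a by (auto intro!: powr_mono2')
  have ia: "1 / t powr \<alpha> = a" "1 / s powr \<alpha> = b" unfolding a_def b_def by (simp_all add: powr_minus_divide)
  have rhs: "(U - u0)/(t powr \<alpha> * \<Gamma>) - (V - v0)/(s powr \<alpha> * \<Gamma>) = ((U - u0) * a - (V - v0) * b) / \<Gamma>"
  proof -
    have "\<And>x p q. x/(p*\<Gamma>) = x*(1/p)/\<Gamma>" by simp
    thus ?thesis unfolding ia[symmetric] by (simp add: diff_divide_distrib)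
  qed
  have Cabs: "Cabs \<ge> 0" using Vb by simp
  have n1: "\<theta> * T powr (-\<alpha>) \<le> (U - V) * a"
  proof -
    have "\<theta> * T powr (-\<alpha>) \<le> \<theta> * a" using aT UV by (intro mult_left_mono) auto
    also have "\<dots> \<le> (U - V) * a" using UV ap by (intro mult_right_mono) auto
    finally show ?thesis .
  qed
  have n2: "- Cabs * \<bar>a - b\<bar> \<le> V * (a - b)"
  proof -
    have "\<bar>V * (a - b)\<bar> \<le> Cabs * \<bar>a - b\<bar>" unfolding abs_mult using Vb by (intro mult_right_mono) auto
    thus ?thesis by linarith
  qed
  have n3: "- \<eta> * m - Cabs * \<bar>a - b\<bar> \<le> - u0 * a + v0 * b"
  proof (cases "b \<le> a")
    case True
    have "(u0 - v0) * b \<le> \<eta> * m" by (rule mult_mono) (use uv0 am ap in auto)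
    moreover have "u0 * (a - b) \<le> Cabs * (a - b)" using u0 True by (intro mult_right_mono) auto
    moreover have "- u0 * a + v0 * b = - ((u0 - v0) * b) - u0 * (a - b)" by (simp add: algebra_simps)
    ultimately show ?thesis using True by simp
  next
    case False
    have "(u0 - v0) * a \<le> \<eta> * m" by (rule mult_mono) (use uv0 am ap in auto)
    moreover have "- Cabs * (b - a) \<le> v0 * (b - a)" using v0 False by (intro mult_right_mono) auto
    moreover have "- u0 * a + v0 * b = - ((u0 - v0) * a) + v0 * (b - a)" by (simp add: algebra_simps)
    ultimately show ?thesis using False by simp
  qed
  have "\<theta> * T powr (-\<alpha>) - 2*Cabs*\<bar>a - b\<bar> - \<eta> * m \<le> (U - u0) * a - (V - v0) * b"
    using n1 n2 n3 by (simp add: algebra_simps)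
  hence "(\<theta> * T powr (-\<alpha>) - 2*Cabs*\<bar>a - b\<bar> - \<eta> * m) / \<Gamma> \<le> ((U - u0) * a - (V - v0) * b) / \<Gamma>"
    using G by (intro divide_right_mono) auto
  thus ?thesis unfolding rhs a_def b_def m_def .
qed


lemma shift_cube:
  fixes x :: "real^'d"
  shows "\<exists>z::real^'d. (\<forall>i. z$i \<in> \<int>) \<and> x - z \<in> cbox 0 1"
proof (intro exI[of _ "\<chi> i. of_int \<lfloor>x$i\<rfloor>"] conjI allI)
  fix i show "(\<chi> i. real_of_int \<lfloor>x$i\<rfloor>) $ i \<in> \<int>" by simp
next
  show "x - (\<chi> i. real_of_int \<lfloor>x$i\<rfloor>) \<in> cbox 0 1"
    unfolding mem_box_cart
  proof (intro allI conjI)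
    fix i
    show "0 $ i \<le> (x - (\<chi> i. real_of_int \<lfloor>x$i\<rfloor>)) $ i" by (simp add: of_int_floor_le)
    have "x$i < real_of_int \<lfloor>x$i\<rfloor> + 1" by linarith
    thus "(x - (\<chi> i. real_of_int \<lfloor>x$i\<rfloor>)) $ i \<le> 1 $ i" by simp linarith
  qed
qed

lemma per_shift:
  assumes "periodic_x f" "\<forall>i. z$i \<in> \<int>"
  shows "f t (x - z) = f t x"
  using assms unfolding periodic_x_def by (metis diff_add_cancel)

lemma usc_uscm: "usc_on S f \<Longrightarrow> K \<subseteq> S \<Longrightarrow> uscm K f"
  unfolding uscm_def using usc_metricD by (meson subsetD)

lemma lsc_uscm: "lsc_on S f \<Longrightarrow> K \<subseteq> S \<Longrightarrow> uscm K (\<lambda>p. - f p)"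
  using lsc_neg_usc usc_uscm by blast

lemma uscm_add:
  assumes "uscm K f" "uscm K g" shows "uscm K (\<lambda>p. f p + g p)"
  unfolding uscm_def
proof (intro ballI allI impI)
  fix p and e :: real assume p: "p \<in> K" and e: "e > 0"
  obtain d1 where d1: "d1 > 0" "\<forall>q\<in>K. dist q p < d1 \<longrightarrow> f q < f p + e/2"
    using assms(1) p e unfolding uscm_def by (meson half_gt_zero)
  obtain d2 where d2: "d2 > 0" "\<forall>q\<in>K. dist q p < d2 \<longrightarrow> g q < g p + e/2"
    using assms(2) p e unfolding uscm_def by (meson half_gt_zero)
  show "\<exists>d>0. \<forall>q\<in>K. dist q p < d \<longrightarrow> f q + g q < f p + g p + e"
    using d1 d2 by (intro exI[of _ "min d1 d2"]) force
qed

lemma cont_uscm: "continuous_on K f \<Longrightarrow> uscm K f"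
  unfolding uscm_def continuous_on_iff dist_real_def
  by (meson abs_diff_less_iff)

lemma uscm_fst:
  assumes "uscm K1 f" "\<forall>q\<in>K. fst q \<in> K1" shows "uscm K (\<lambda>q. f (fst q))"
  unfolding uscm_def
proof (intro ballI allI impI)
  fix p and e :: real assume p: "p \<in> K" and e: "e > 0"
  obtain d where d: "d > 0" "\<forall>q\<in>K1. dist q (fst p) < d \<longrightarrow> f q < f (fst p) + e"
    using assms p e unfolding uscm_def by meson
  show "\<exists>d>0. \<forall>q\<in>K. dist q p < d \<longrightarrow> f (fst q) < f (fst p) + e"
  proof (intro exI[of _ d] conjI ballI impI)
    fix q assume "q \<in> K" "dist q p < d"
    thus "f (fst q) < f (fst p) + e" using d assms(2) dist_fst_le[of q p] by force
  qed (rule d(1))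
qed

lemma uscm_snd:
  assumes "uscm K1 f" "\<forall>q\<in>K. snd q \<in> K1" shows "uscm K (\<lambda>q. f (snd q))"
  unfolding uscm_def
proof (intro ballI allI impI)
  fix p and e :: real assume p: "p \<in> K" and e: "e > 0"
  obtain d where d: "d > 0" "\<forall>q\<in>K1. dist q (snd p) < d \<longrightarrow> f q < f (snd p) + e"
    using assms p e unfolding uscm_def by meson
  show "\<exists>d>0. \<forall>q\<in>K. dist q p < d \<longrightarrow> f (snd q) < f (snd p) + e"
  proof (intro exI[of _ d] conjI ballI impI)
    fix q assume "q \<in> K" "dist q p < d"
    thus "f (snd q) < f (snd p) + e" using d assms(2) dist_snd_le[of q p] by force
  qed (rule d(1))
qed

lemma uscm_seq:
  assumes "uscm S f" "p \<in> S" "\<forall>n. q n \<in> S" "q \<longlonglongrightarrow> p" "e > 0"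
  shows "\<forall>\<^sub>F n in sequentially. f (q n) < f p + e"
proof -
  obtain d where d: "d > 0" "\<forall>q\<in>S. dist q p < d \<longrightarrow> f q < f p + e"
    using assms unfolding uscm_def by meson
  have "\<forall>\<^sub>F n in sequentially. dist (q n) p < d" using assms(4) d(1) by (rule tendstoD)
  thus ?thesis by (rule eventually_mono) (use d assms(3) in auto)
qed



theorem theorem3p1:
  fixes \<alpha> T :: real
    and H :: "real \<Rightarrow> real^'d \<Rightarrow> real \<Rightarrow> real^'d \<Rightarrow> real"
    and u v :: "real \<Rightarrow> real^'d \<Rightarrow> real"
  assumes alpha: "0 < \<alpha>" "\<alpha> < 1"
    and T: "0 < T"
    and H_per: "periodic_x H"
    and A1: "continuous_on ({0..T} \<times> UNIV \<times> UNIV \<times> UNIV) (\<lambda>(t, x, r, p). H t x r p)"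
    and A2: "\<exists>\<omega>. is_modulus \<omega> \<and> (\<forall>t\<in>{0..T}. \<forall>x y r p.
               \<bar>H t x r p - H t y r p\<bar> \<le> \<omega> (norm (x - y) * (1 + norm p)))"
    and A3: "\<forall>t x p. mono (\<lambda>r. H t x r p)"
    and u_per: "periodic_x u" and v_per: "periodic_x v"
    and sub: "visc_sub \<alpha> T H u"
    and super: "visc_super \<alpha> T H v"
    and init: "\<forall>x. u 0 x \<le> v 0 x"
  shows "\<forall>t\<in>{0..T}. \<forall>x. u t x \<le> v t x"
proof (rule ccontr)
  assume neg: "\<not> (\<forall>t\<in>{0..T}. \<forall>x. u t x \<le> v t x)"
  then obtain t1 x1 where t1: "t1 \<in> {0..T}" "v t1 x1 < u t1 x1" by (auto simp: not_le)
  define D where "D = {0..T} \<times> (UNIV :: (real^'d) set)"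
  have usc: "usc_on D (\<lambda>p. u (fst p) (snd p))" using sub unfolding visc_sub_def D_def by blast
  have lsc: "lsc_on D (\<lambda>p. v (fst p) (snd p))" using super unfolding visc_super_def D_def by blast
  define Q where "Q = cbox (0::real^'d) 1"
  have "0 \<in> Q" unfolding Q_def mem_box_cart by simp
  hence Qc: "compact Q" "Q \<noteq> {}" unfolding Q_def by auto
  obtain \<rho>0 where \<rho>0: "\<rho>0 > 0" "\<forall>x\<in>Q. norm x \<le> \<rho>0"
    using compact_imp_bounded[OF Qc(1)] unfolding bounded_pos by blast
  define X where "X = {0..T} \<times> Q"
  have Xc: "compact X" "X \<noteq> {}" "X \<subseteq> D" unfolding X_def D_def using Qc T by (auto intro: compact_Times)
  have shiftQ: "\<And>x. \<exists>z. (\<forall>i. z$i \<in> \<int>) \<and> x - z \<in> Q" using shift_cube unfolding Q_def by blast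
  obtain pu where pu: "pu \<in> X" "\<forall>q\<in>X. u (fst q) (snd q) \<le> u (fst pu) (snd pu)"
    using usc_max[OF Xc(1,2) usc_uscm[OF usc Xc(3)]] by blast
  define Mu where "Mu = u (fst pu) (snd pu)"
  have Mu: "\<forall>t\<in>{0..T}. \<forall>x. u t x \<le> Mu"
  proof (intro ballI allI)
    fix t x assume t: "t \<in> {0..T}"
    obtain z where z: "\<forall>i. z$i \<in> \<int>" "x - z \<in> Q" using shiftQ by blast
    have "u t x = u t (x - z)" using per_shift[OF u_per z(1)] by simp
    also have "\<dots> \<le> Mu" using pu(2) t z(2) unfolding Mu_def X_def by force
    finally show "u t x \<le> Mu" .
  qed
  obtain pv where pv: "pv \<in> X" "\<forall>q\<in>X. - v (fst q) (snd q) \<le> - v (fst pv) (snd pv)"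
    using usc_max[OF Xc(1,2) lsc_uscm[OF lsc Xc(3)]] by blast
  define mv where "mv = v (fst pv) (snd pv)"
  have mv: "\<forall>t\<in>{0..T}. \<forall>x. mv \<le> v t x"
  proof (intro ballI allI)
    fix t x assume t: "t \<in> {0..T}"
    obtain z where z: "\<forall>i. z$i \<in> \<int>" "x - z \<in> Q" using shiftQ by blast
    have "v t x = v t (x - z)" using per_shift[OF v_per z(1)] by simp
    moreover have "mv \<le> v t (x - z)" using pv(2) t z(2) unfolding mv_def X_def by force
    ultimately show "mv \<le> v t x" by simp
  qed
  have uvm: "uscm X (\<lambda>q. u (fst q) (snd q) + - v (fst q) (snd q))"
    by (rule uscm_add[OF usc_uscm[OF usc Xc(3)] lsc_uscm[OF lsc Xc(3)]])
  obtain p0 where p0: "p0 \<in> X" "\<forall>q\<in>X. u (fst q) (snd q) + - v (fst q) (snd q) \<le> u (fst p0) (snd p0) + - v (fst p0) (snd p0)"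
    using usc_max[OF Xc(1,2) uvm] by blast
  define t0 where "t0 = fst p0"
  define x0 where "x0 = snd p0"
  define \<theta> where "\<theta> = u t0 x0 - v t0 x0"
  have t0x0: "t0 \<in> {0..T}" "x0 \<in> Q" using p0(1) unfolding t0_def x0_def X_def by auto
  have th: "\<forall>t\<in>{0..T}. \<forall>x. u t x - v t x \<le> \<theta>"
  proof (intro ballI allI)
    fix t x assume t: "t \<in> {0..T}"
    obtain z where z: "\<forall>i. z$i \<in> \<int>" "x - z \<in> Q" using shiftQ by blast
    have "u t x = u t (x - z)" "v t x = v t (x - z)"
      using per_shift[OF u_per z(1)] per_shift[OF v_per z(1)] by simp_all
    moreover have "u t (x - z) + - v t (x - z) \<le> \<theta>" using p0(2) t z(2)
      unfolding \<theta>_def t0_def x0_def X_def by force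
    ultimately show "u t x - v t x \<le> \<theta>" by simp
  qed
  have thpos: "\<theta> > 0" using th[rule_format, OF t1(1), of x1] t1(2) by linarith
  define C where "C = Mu - mv"
  have CTh: "\<theta> \<le> C" using Mu[rule_format, OF t0x0(1), of x0] mv[rule_format, OF t0x0(1), of x0]
    unfolding C_def \<theta>_def by linarith
  have Cpos: "C > 0" using CTh thpos by simp

  define \<epsilon> where "\<epsilon> = (\<lambda>n::nat. 1 / (real n + 1))"
  have ep: "\<And>n. 0 < \<epsilon> n" "\<And>n. \<epsilon> n \<le> 1" unfolding \<epsilon>_def by (auto simp: field_simps)
  define Rp where "Rp = (\<lambda>n. sqrt (2*C/\<epsilon> n))"
  have Hdelta: "\<forall>n. \<exists>\<delta>. \<delta> > 0 \<and> \<delta> \<le> \<epsilon> n \<and> (\<forall>t s x V p. t \<in> {0..T} \<longrightarrow> s \<in> {0..T} \<longrightarrow> x \<in> Q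
      \<longrightarrow> V \<in> {mv..Mu} \<longrightarrow> norm p \<le> Rp n \<longrightarrow> (t-s)^2 \<le> 2*\<delta>*C \<longrightarrow> \<bar>H t x V p - H s x V p\<bar> < \<epsilon> n)"
  proof
    fix n
    define KH where "KH = {0..T} \<times> Q \<times> {mv..Mu} \<times> cball (0::real^'d) (Rp n)"
    have "compact KH" unfolding KH_def using Qc by (intro compact_Times) auto
    moreover have "continuous_on KH (\<lambda>(t, x, r, p). H t x r p)"
      by (rule continuous_on_subset[OF A1]) (auto simp: KH_def)
    ultimately have uc: "uniformly_continuous_on KH (\<lambda>(t, x, r, p). H t x r p)"
      by (intro compact_uniformly_continuous)
    obtain d where d: "d > 0" "\<forall>a\<in>KH. \<forall>b\<in>KH. dist b a < d \<longrightarrow>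
        dist ((\<lambda>(t, x, r, p). H t x r p) b) ((\<lambda>(t, x, r, p). H t x r p) a) < \<epsilon> n"
      using uc[unfolded uniformly_continuous_on_def, rule_format, OF ep(1)[of n]] by blast
    define \<delta> where "\<delta> = min (\<epsilon> n) (d^2/(4*C))"
    have \<delta>pos: "\<delta> > 0" unfolding \<delta>_def using ep d Cpos by simp
    show "\<exists>\<delta>. \<delta> > 0 \<and> \<delta> \<le> \<epsilon> n \<and> (\<forall>t s x V p. t \<in> {0..T} \<longrightarrow> s \<in> {0..T} \<longrightarrow> x \<in> Q
      \<longrightarrow> V \<in> {mv..Mu} \<longrightarrow> norm p \<le> Rp n \<longrightarrow> (t-s)^2 \<le> 2*\<delta>*C \<longrightarrow> \<bar>H t x V p - H s x V p\<bar> < \<epsilon> n)"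
    proof (intro exI[of _ \<delta>] conjI allI impI \<delta>pos)
      show "\<delta> \<le> \<epsilon> n" unfolding \<delta>_def by simp
      fix t s V :: real and x p :: "real^'d" assume h: "t \<in> {0..T}" "s \<in> {0..T}" "x \<in> Q" "V \<in> {mv..Mu}" "norm p \<le> Rp n"
        "(t-s)^2 \<le> 2*\<delta>*C"
      have "2*\<delta>*C \<le> 2*(d^2/(4*C))*C" unfolding \<delta>_def using Cpos by (intro mult_right_mono) auto
      also have "\<dots> = d^2/2" using Cpos by simp
      also have "\<dots> < d^2" using d by simp
      finally have "(t-s)^2 < d^2" using h(6) by simp
      hence ltd: "\<bar>t-s\<bar> < d" using power2_less_imp_less[of "\<bar>t-s\<bar>" d] d(1) by simp
      have inK: "(t, x, V, p) \<in> KH" "(s, x, V, p) \<in> KH" using h unfolding KH_def by auto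
      have "dist (s, x, V, p) (t, x, V, p) < d" using ltd by (simp add: dist_Pair_Pair dist_real_def abs_minus_commute)
      hence "dist (H s x V p) (H t x V p) < \<epsilon> n" using d(2) inK by fastforce
      thus "\<bar>H t x V p - H s x V p\<bar> < \<epsilon> n" by (simp add: dist_real_def abs_minus_commute)
    qed
  qed

  from choice[OF Hdelta] obtain \<delta> where \<delta>: "\<forall>n. \<delta> n > 0 \<and> \<delta> n \<le> \<epsilon> n \<and> (\<forall>t s x V p. t \<in> {0..T} \<longrightarrow> s \<in> {0..T} \<longrightarrow> x \<in> Q
      \<longrightarrow> V \<in> {mv..Mu} \<longrightarrow> norm p \<le> Rp n \<longrightarrow> (t-s)^2 \<le> 2*\<delta> n*C \<longrightarrow> \<bar>H t x V p - H s x V p\<bar> < \<epsilon> n)"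
    by blast
  have dpos: "\<And>n. \<delta> n > 0" and dle: "\<And>n. \<delta> n \<le> \<epsilon> n" using \<delta> by auto
  define pen where "pen = (\<lambda>n t (x::real^'d) s y. (1/(2*\<epsilon> n))*((x-y)\<bullet>(x-y)) + (1/(2*\<delta> n))*(t-s)^2)"
  define Ph where "Ph = (\<lambda>n t x s y. u t x - v s y - pen n t x s y)"
  have pen_nn: "pen n t x s y \<ge> 0" for n t x s y unfolding pen_def using ep(1)[of n] dpos[of n] by simp
  define Ry where "Ry = \<rho>0 + sqrt (2*C)"
  define K' where "K' = ({0..T} \<times> Q) \<times> ({0..T} \<times> cball (0::real^'d) Ry)"
  have x0Ry: "x0 \<in> cball 0 Ry"
  proof -
    have "norm x0 \<le> \<rho>0" using \<rho>0 t0x0 by auto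
    moreover have "sqrt (2*C) \<ge> 0" using Cpos by simp
    ultimately have "norm x0 \<le> Ry" unfolding Ry_def by linarith
    thus ?thesis by simp
  qed
  have p0K: "((t0, x0), (t0, x0)) \<in> K'" using t0x0 x0Ry unfolding K'_def by auto
  have K'c: "compact K'" "K' \<noteq> {}"
    subgoal unfolding K'_def by (intro compact_Times compact_Icc compact_cball Qc(1))
    subgoal using p0K by auto
    done
  have K'D: "\<forall>q\<in>K'. fst q \<in> D" "\<forall>q\<in>K'. snd q \<in> D" unfolding K'_def D_def by auto
  have maxK: "\<forall>n. \<exists>q. q \<in> K' \<and> (\<forall>q'\<in>K'. Ph n (fst (fst q')) (snd (fst q')) (fst (snd q')) (snd (snd q'))
               \<le> Ph n (fst (fst q)) (snd (fst q)) (fst (snd q)) (snd (snd q)))"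
  proof
    fix n
    have a: "uscm K' (\<lambda>q. u (fst (fst q)) (snd (fst q)))"
      using uscm_fst[OF usc_uscm[OF usc order_refl] K'D(1)] by simp
    have b: "uscm K' (\<lambda>q. - v (fst (snd q)) (snd (snd q)))"
      using uscm_snd[OF lsc_uscm[OF lsc order_refl] K'D(2)] by simp
    have c: "uscm K' (\<lambda>q. - pen n (fst (fst q)) (snd (fst q)) (fst (snd q)) (snd (snd q)))"
      unfolding pen_def by (intro cont_uscm continuous_intros)
    have "uscm K' (\<lambda>q. u (fst (fst q)) (snd (fst q)) + - v (fst (snd q)) (snd (snd q))
        + - pen n (fst (fst q)) (snd (fst q)) (fst (snd q)) (snd (snd q)))"
      by (rule uscm_add[OF uscm_add[OF a b] c])
    hence "uscm K' (\<lambda>q. Ph n (fst (fst q)) (snd (fst q)) (fst (snd q)) (snd (snd q)))"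
      unfolding Ph_def by simp
    from usc_max[OF K'c this] show "\<exists>q. q \<in> K' \<and> (\<forall>q'\<in>K'. Ph n (fst (fst q')) (snd (fst q')) (fst (snd q')) (snd (snd q'))
               \<le> Ph n (fst (fst q)) (snd (fst q)) (fst (snd q)) (snd (snd q)))" by blast
  qed
  from choice[OF maxK] obtain qq where qq: "\<And>n. qq n \<in> K'"
    "\<And>n q'. q' \<in> K' \<Longrightarrow> Ph n (fst (fst q')) (snd (fst q')) (fst (snd q')) (snd (snd q'))
               \<le> Ph n (fst (fst (qq n))) (snd (fst (qq n))) (fst (snd (qq n))) (snd (snd (qq n)))"
    by blast
  define tt where "tt = (\<lambda>n. fst (fst (qq n)))"
  define xx where "xx = (\<lambda>n. snd (fst (qq n)))"
  define ss where "ss = (\<lambda>n. fst (snd (qq n)))"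
  define yy where "yy = (\<lambda>n. snd (snd (qq n)))"
  have qqin: "tt n \<in> {0..T}" "xx n \<in> Q" "ss n \<in> {0..T}" "norm (yy n) \<le> Ry" for n
    using qq(1)[of n] unfolding tt_def xx_def ss_def yy_def K'_def by auto
  have PhTh: "\<theta> \<le> Ph n (tt n) (xx n) (ss n) (yy n)" for n
  proof -
    have "Ph n t0 x0 t0 x0 = \<theta>" unfolding Ph_def pen_def \<theta>_def by simp
    thus ?thesis using qq(2)[OF p0K, of n] unfolding tt_def xx_def ss_def yy_def by simp
  qed
  have globmax: "Ph n t x s y \<le> Ph n (tt n) (xx n) (ss n) (yy n)" if ts: "t \<in> {0..T}" "s \<in> {0..T}" for n t x s y
  proof -
    obtain z where z: "\<forall>i. z$i \<in> \<int>" "x - z \<in> Q" using shiftQ by blast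
    have eq: "Ph n t x s y = Ph n t (x - z) s (y - z)"
      unfolding Ph_def pen_def using per_shift[OF u_per z(1)] per_shift[OF v_per z(1)] by simp
    show ?thesis
    proof (cases "norm (y - z) \<le> Ry")
      case True
      hence "((t, x - z), (s, y - z)) \<in> K'" using ts z unfolding K'_def by auto
      from qq(2)[OF this, of n] show ?thesis unfolding eq tt_def xx_def ss_def yy_def by simp
    next
      case False
      have nx: "norm (x - z) \<le> \<rho>0" using \<rho>0 z by auto
      have "norm (y - z) \<le> norm (x - z) + norm ((x - z) - (y - z))"
        by (metis add_diff_cancel_left' diff_add_cancel norm_minus_commute norm_triangle_ineq4 order_trans add.commute norm_triangle_sub)
      hence "sqrt (2*C) < norm ((x - z) - (y - z))" using False nx unfolding Ry_def by simp
      hence "(sqrt (2*C))^2 < (norm ((x - z) - (y - z)))^2"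
        using Cpos by (intro power_strict_mono) auto
      hence I: "2*C < ((x - z) - (y - z)) \<bullet> ((x - z) - (y - z))"
        using Cpos by (simp add: power2_norm_eq_inner)
      have "C \<le> C / \<epsilon> n" using Cpos ep[of n] by (simp add: field_simps)
      also have "C / \<epsilon> n = (1/(2*\<epsilon> n)) * (2*C)" using ep(1)[of n] by simp
      also have "\<dots> < (1/(2*\<epsilon> n)) * (((x - z) - (y - z)) \<bullet> ((x - z) - (y - z)))"
        using I ep(1)[of n] by (intro mult_strict_left_mono) auto
      also have "\<dots> \<le> pen n t (x - z) s (y - z)" unfolding pen_def using dpos[of n] by simp
      finally have "C < pen n t (x - z) s (y - z)" .
      moreover have "u t (x - z) \<le> Mu" "mv \<le> v s (y - z)" using Mu mv ts by auto
      ultimately have "Ph n t (x - z) s (y - z) < 0" unfolding Ph_def C_def by linarith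
      hence "Ph n t x s y < 0" using eq by simp
      thus ?thesis using PhTh[of n] thpos by simp
    qed
  qed

  define w where "w = (\<lambda>n. u (tt n) (xx n) - v (ss n) (yy n))"
  define pn where "pn = (\<lambda>n. pen n (tt n) (xx n) (ss n) (yy n))"
  have wpn: "\<theta> + pn n \<le> w n" for n using PhTh[of n] unfolding Ph_def w_def pn_def by simp
  have Ut: "u (tt n) (xx n) \<le> Mu" and Vs: "mv \<le> v (ss n) (yy n)" for n
    using Mu[rule_format, OF qqin(1)] mv[rule_format, OF qqin(3)] by auto
  have wC: "w n \<le> C" for n using Ut[of n] Vs[of n] unfolding w_def C_def by simp
  have pnn: "0 \<le> pn n" for n unfolding pn_def by (rule pen_nn)
  have pnC: "pn n \<le> C" for n using wpn[of n] wC[of n] thpos by simp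
  define I where "I = (\<lambda>n. (xx n - yy n) \<bullet> (xx n - yy n))"
  have Inn: "0 \<le> I n" for n unfolding I_def by simp
  have Ipn: "(1/(2*\<epsilon> n)) * I n \<le> pn n" for n
    unfolding pn_def pen_def I_def using dpos[of n] by simp
  have tspn: "(1/(2*\<delta> n)) * (tt n - ss n)^2 \<le> pn n" for n
    unfolding pn_def pen_def using ep(1)[of n] by simp
  have I_le: "I n \<le> 2*\<epsilon> n*C" for n
  proof -
    have "I n = 2*\<epsilon> n * ((1/(2*\<epsilon> n)) * I n)" using ep(1)[of n] by simp
    also have "\<dots> \<le> 2*\<epsilon> n * C" using Ipn[of n] pnC[of n] ep(1)[of n] by (intro mult_left_mono) auto
    finally show ?thesis by simp
  qed
  have ts_le: "(tt n - ss n)^2 \<le> 2*\<delta> n*C" for n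
  proof -
    have "(tt n - ss n)^2 = 2*\<delta> n * ((1/(2*\<delta> n)) * (tt n - ss n)^2)" using dpos[of n] by simp
    also have "\<dots> \<le> 2*\<delta> n * C" using tspn[of n] pnC[of n] dpos[of n] by (intro mult_left_mono) auto
    finally show ?thesis by simp
  qed
  have UV: "v (ss n) (yy n) \<le> u (tt n) (xx n)" for n using wpn[of n] pnn[of n] thpos unfolding w_def by simp
  define pp where "pp = (\<lambda>n. (1/\<epsilon> n) *\<^sub>R (xx n - yy n))"
  have nxy: "norm (xx n - yy n) = sqrt (I n)" for n unfolding I_def by (simp add: norm_eq_sqrt_inner)
  have npp: "norm (pp n) = norm (xx n - yy n) / \<epsilon> n" for n unfolding pp_def using ep(1)[of n] by simp
  have ppR: "norm (pp n) \<le> Rp n" for n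
  proof -
    have "(norm (pp n))^2 = I n / (\<epsilon> n)^2" unfolding npp nxy using Inn[of n] by (simp add: power_divide)
    also have "\<dots> \<le> (2*\<epsilon> n*C) / (\<epsilon> n)^2" using I_le[of n] ep(1)[of n] by (intro divide_right_mono) auto
    also have "\<dots> = 2*C/\<epsilon> n" using ep(1)[of n] by (simp add: power2_eq_square)
    finally show ?thesis unfolding Rp_def by (rule real_le_rsqrt)
  qed
  obtain qb and \<sigma> :: "nat \<Rightarrow> nat" where qb: "qb \<in> K'" "strict_mono \<sigma>" "(qq \<circ> \<sigma>) \<longlonglongrightarrow> qb"
    using seq_compactE[OF compact_imp_seq_compact[OF K'c(1)], of qq] qq(1) by blast
  define tb where "tb = fst (fst qb)"
  define xb where "xb = snd (fst qb)"
  define sb where "sb = fst (snd qb)"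
  define yb where "yb = snd (snd qb)"
  have ctt: "(\<lambda>n. tt (\<sigma> n)) \<longlonglongrightarrow> tb" using tendsto_fst[OF tendsto_fst[OF qb(3)]] unfolding tt_def tb_def o_def by simp
  have cxx: "(\<lambda>n. xx (\<sigma> n)) \<longlonglongrightarrow> xb" using tendsto_snd[OF tendsto_fst[OF qb(3)]] unfolding xx_def xb_def o_def by simp
  have css: "(\<lambda>n. ss (\<sigma> n)) \<longlonglongrightarrow> sb" using tendsto_fst[OF tendsto_snd[OF qb(3)]] unfolding ss_def sb_def o_def by simp
  have cyy: "(\<lambda>n. yy (\<sigma> n)) \<longlonglongrightarrow> yb" using tendsto_snd[OF tendsto_snd[OF qb(3)]] unfolding yy_def yb_def o_def by simp
  have tbT: "tb \<in> {0..T}" "xb \<in> Q" using qb(1) unfolding tb_def xb_def K'_def by auto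
  have eps00: "\<epsilon> \<longlonglongrightarrow> 0" unfolding \<epsilon>_def using LIMSEQ_inverse_real_of_nat
    by (simp add: inverse_eq_divide add.commute)
  have eps0: "(\<lambda>n. \<epsilon> (\<sigma> n)) \<longlonglongrightarrow> 0" using LIMSEQ_subseq_LIMSEQ[OF eps00 qb(2)] by (simp add: o_def)
  have sq0: "(\<lambda>n. sqrt (2*\<epsilon> (\<sigma> n)*C)) \<longlonglongrightarrow> 0"
    using tendsto_real_sqrt[OF tendsto_mult[OF tendsto_mult[OF tendsto_const eps0] tendsto_const], of 2 C] by simp
  have ts0: "(\<lambda>n. tt (\<sigma> n) - ss (\<sigma> n)) \<longlonglongrightarrow> 0"
  proof (rule Lim_null_comparison[OF _ sq0], intro always_eventually allI)
    fix n
    have "norm (tt (\<sigma> n) - ss (\<sigma> n)) = sqrt ((tt (\<sigma> n) - ss (\<sigma> n))^2)" by simp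
    also have "\<dots> \<le> sqrt (2*\<epsilon> (\<sigma> n)*C)"
      using ts_le[of "\<sigma> n"] dle[of "\<sigma> n"] Cpos by (intro real_sqrt_le_mono) (smt (verit) mult_right_mono)
    finally show "norm (tt (\<sigma> n) - ss (\<sigma> n)) \<le> sqrt (2*\<epsilon> (\<sigma> n)*C)" .
  qed
  have xy0: "(\<lambda>n. xx (\<sigma> n) - yy (\<sigma> n)) \<longlonglongrightarrow> 0"
  proof (rule Lim_null_comparison[OF _ sq0], intro always_eventually allI)
    fix n
    show "norm (xx (\<sigma> n) - yy (\<sigma> n)) \<le> sqrt (2*\<epsilon> (\<sigma> n)*C)"
      unfolding nxy using I_le[of "\<sigma> n"] by (rule real_sqrt_le_mono)
  qed
  have sbtb: "sb = tb"
  proof -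
    have "(\<lambda>n. tt (\<sigma> n) - ss (\<sigma> n)) \<longlonglongrightarrow> tb - sb" by (intro tendsto_diff ctt css)
    with ts0 have "tb - sb = 0" by (rule LIMSEQ_unique[rotated])
    thus ?thesis by simp
  qed
  have ybxb: "yb = xb"
  proof -
    have "(\<lambda>n. xx (\<sigma> n) - yy (\<sigma> n)) \<longlonglongrightarrow> xb - yb" by (intro tendsto_diff cxx cyy)
    with xy0 have "xb - yb = 0" by (rule LIMSEQ_unique[rotated])
    thus ?thesis by simp
  qed
  have uD: "uscm D (\<lambda>p. u (fst p) (snd p))" by (rule usc_uscm[OF usc order_refl])
  have vD: "uscm D (\<lambda>p. - v (fst p) (snd p))" by (rule lsc_uscm[OF lsc order_refl])
  have inD: "(tb, xb) \<in> D" "(0, xb) \<in> D" "\<And>n. (tt n, xx n) \<in> D" "\<And>n. (ss n, yy n) \<in> D"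
    "\<And>n. (0, xx n) \<in> D" "\<And>n. (0, yy n) \<in> D"
    using tbT qqin T unfolding D_def by auto
  have ulim: "\<forall>\<^sub>F n in sequentially. u (tt (\<sigma> n)) (xx (\<sigma> n)) < u tb xb + \<eta>" if "\<eta> > 0" for \<eta>
    using uscm_seq[OF uD inD(1), of "\<lambda>n. (tt (\<sigma> n), xx (\<sigma> n))" \<eta>] inD(3) tendsto_Pair[OF ctt cxx] that by simp
  have vlim: "\<forall>\<^sub>F n in sequentially. - v (ss (\<sigma> n)) (yy (\<sigma> n)) < - v tb xb + \<eta>" if "\<eta> > 0" for \<eta>
    using uscm_seq[OF vD inD(1), of "\<lambda>n. (ss (\<sigma> n), yy (\<sigma> n))" \<eta>] inD(4) tendsto_Pair[OF css cyy] that
    unfolding sbtb ybxb by simp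
  have u0lim: "\<forall>\<^sub>F n in sequentially. u 0 (xx (\<sigma> n)) < u 0 xb + \<eta>" if "\<eta> > 0" for \<eta>
    using uscm_seq[OF uD inD(2), of "\<lambda>n. (0, xx (\<sigma> n))" \<eta>] inD(5) tendsto_Pair[OF tendsto_const[of "0::real"] cxx] that by simp
  have v0lim: "\<forall>\<^sub>F n in sequentially. - v 0 (yy (\<sigma> n)) < - v 0 xb + \<eta>" if "\<eta> > 0" for \<eta>
    using uscm_seq[OF vD inD(2), of "\<lambda>n. (0, yy (\<sigma> n))" \<eta>] inD(6) tendsto_Pair[OF tendsto_const[of "0::real"] cyy] that
    unfolding ybxb by simp
  have wlim: "\<forall>\<^sub>F n in sequentially. w (\<sigma> n) < u tb xb - v tb xb + 2*\<eta>" if "\<eta> > 0" for \<eta>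
    using eventually_conj[OF ulim[OF that] vlim[OF that]] by (rule eventually_mono) (simp add: w_def)
  have tbpos: "tb > 0"
  proof (rule ccontr)
    assume "\<not> tb > 0"
    hence tb0: "tb = 0" using tbT by simp
    have ev: "\<forall>\<^sub>F n in sequentially. w (\<sigma> n) < u tb xb - v tb xb + 2*(\<theta>/2)" using thpos by (intro wlim) simp
    have le0: "u tb xb - v tb xb \<le> 0" using init tb0 by simp
    have "\<forall>\<^sub>F n in sequentially. False"
      using ev proof (rule eventually_mono)
      fix n assume "w (\<sigma> n) < u tb xb - v tb xb + 2*(\<theta>/2)"
      with wpn[of "\<sigma> n"] pnn[of "\<sigma> n"] le0 show False by linarith
    qed
    thus False by simp
  qed
  have pn0: "\<forall>\<^sub>F n in sequentially. pn (\<sigma> n) < 2*\<eta>" if "\<eta> > 0" for \<eta>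
  proof -
    have "u tb xb - v tb xb \<le> \<theta>" using th tbT by blast
    note ev = wlim[OF that]
    show ?thesis using ev proof (rule eventually_mono)
      fix n assume "w (\<sigma> n) < u tb xb - v tb xb + 2*\<eta>"
      with wpn[of "\<sigma> n"] \<open>u tb xb - v tb xb \<le> \<theta>\<close> show "pn (\<sigma> n) < 2*\<eta>" by linarith
    qed
  qed
  have uv0: "\<forall>\<^sub>F n in sequentially. u 0 (xx (\<sigma> n)) - v 0 (yy (\<sigma> n)) < 2*\<eta>" if "\<eta> > 0" for \<eta>
  proof -
    have "u 0 xb \<le> v 0 xb" using init by simp
    note ev = eventually_conj[OF u0lim[OF that] v0lim[OF that]]
    show ?thesis using ev proof (rule eventually_mono)
      fix n assume "u 0 (xx (\<sigma> n)) < u 0 xb + \<eta> \<and> - v 0 (yy (\<sigma> n)) < - v 0 xb + \<eta>"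
      with \<open>u 0 xb \<le> v 0 xb\<close> show "u 0 (xx (\<sigma> n)) - v 0 (yy (\<sigma> n)) < 2*\<eta>" by linarith
    qed
  qed

  define \<Gamma> where "\<Gamma> = Gamma (1-\<alpha>)"
  have \<Gamma>pos: "\<Gamma> > 0" unfolding \<Gamma>_def using alpha by (intro Gamma_real_pos) simp
  define c where "c = \<alpha> / \<Gamma>"
  have cpos: "c > 0" unfolding c_def using alpha \<Gamma>pos by simp
  define \<Theta> where "\<Theta> = \<theta> * T powr (-\<alpha>) / \<Gamma>"
  have \<Theta>pos: "\<Theta> > 0" unfolding \<Theta>_def using thpos T \<Gamma>pos by simp
  define Cabs where "Cabs = \<bar>Mu\<bar> + \<bar>mv\<bar>"
  obtain \<omega> where \<omega>: "is_modulus \<omega>" "\<forall>t\<in>{0..T}. \<forall>x y r p. \<bar>H t x r p - H t y r p\<bar> \<le> \<omega> (norm (x - y) * (1 + norm p))"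
    using A2 by blast
  obtain d\<omega> where d\<omega>: "d\<omega> > 0" "\<And>z. 0 \<le> z \<Longrightarrow> z < d\<omega> \<Longrightarrow> \<omega> z < \<Theta>/8"
  proof -
    have "(\<omega> \<longlongrightarrow> 0) (at_right 0)" "\<omega> 0 = 0" using \<omega>(1) unfolding is_modulus_def by auto
    hence "\<forall>\<^sub>F z in at_right 0. \<omega> z < \<Theta>/8" using \<Theta>pos by (intro order_tendstoD(2)) auto
    then obtain b where b: "b > 0" "\<forall>z>0. z < b \<longrightarrow> \<omega> z < \<Theta>/8" unfolding eventually_at_right_field by auto
    show ?thesis
    proof (rule that[of b])
      fix z :: real assume "0 \<le> z" "z < b"
      thus "\<omega> z < \<Theta>/8" using b \<open>\<omega> 0 = 0\<close> \<Theta>pos by (cases "z = 0") auto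
    qed (rule b(1))
  qed
  define m2 where "m2 = (tb/2) powr (-\<alpha>)"
  have m2pos: "m2 > 0" unfolding m2_def using tbpos by simp
  define \<eta>2 where "\<eta>2 = \<Theta> * \<Gamma> / (8 * m2)"
  have \<eta>2pos: "\<eta>2 > 0" unfolding \<eta>2_def using \<Theta>pos \<Gamma>pos m2pos by simp
  have \<eta>2eq: "\<eta>2 * m2 / \<Gamma> = \<Theta>/8" unfolding \<eta>2_def using \<Gamma>pos m2pos by simp
  define K4 where "K4 = c * (C * (tb/2) powr (-\<alpha>-1))"
  have ev1: "\<forall>\<^sub>F n in sequentially. tb/2 < tt (\<sigma> n)" using tbpos by (intro order_tendstoD(1)[OF ctt]) simp
  have ev2: "\<forall>\<^sub>F n in sequentially. tb/2 < ss (\<sigma> n)" using tbpos by (intro order_tendstoD(1)[OF css[unfolded sbtb]]) simp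
  have ev3: "\<forall>\<^sub>F n in sequentially. 2*Cabs*\<bar>tt (\<sigma> n) powr (-\<alpha>) - ss (\<sigma> n) powr (-\<alpha>)\<bar> / \<Gamma> < \<Theta>/8"
  proof -
    have "(\<lambda>n. 2*Cabs*\<bar>tt (\<sigma> n) powr (-\<alpha>) - ss (\<sigma> n) powr (-\<alpha>)\<bar> / \<Gamma>) \<longlonglongrightarrow> 2*Cabs*\<bar>tb powr (-\<alpha>) - tb powr (-\<alpha>)\<bar> / \<Gamma>"
      using tbpos \<Gamma>pos by (intro tendsto_intros ctt css[unfolded sbtb]) auto
    hence "(\<lambda>n. 2*Cabs*\<bar>tt (\<sigma> n) powr (-\<alpha>) - ss (\<sigma> n) powr (-\<alpha>)\<bar> / \<Gamma>) \<longlonglongrightarrow> 0" by simp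
    thus ?thesis using \<Theta>pos by (intro order_tendstoD(2)) auto
  qed
  have ev4: "\<forall>\<^sub>F n in sequentially. u 0 (xx (\<sigma> n)) - v 0 (yy (\<sigma> n)) < \<eta>2"
    using uv0[of "\<eta>2/2"] \<eta>2pos by simp
  have ev5: "\<forall>\<^sub>F n in sequentially. K4 * \<bar>tt (\<sigma> n) - ss (\<sigma> n)\<bar> < \<Theta>/8"
  proof -
    have "(\<lambda>n. K4 * \<bar>tt (\<sigma> n) - ss (\<sigma> n)\<bar>) \<longlonglongrightarrow> K4 * \<bar>0\<bar>" by (intro tendsto_intros ts0)
    thus ?thesis using \<Theta>pos by (intro order_tendstoD(2)) auto
  qed
  have ev6: "\<forall>\<^sub>F n in sequentially. \<epsilon> (\<sigma> n) < \<Theta>/8" using \<Theta>pos by (intro order_tendstoD(2)[OF eps0]) simp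
  have ev7: "\<forall>\<^sub>F n in sequentially. norm (xx (\<sigma> n) - yy (\<sigma> n)) < d\<omega>/2"
  proof -
    have "(\<lambda>n. norm (xx (\<sigma> n) - yy (\<sigma> n))) \<longlonglongrightarrow> norm (0::real^'d)" by (intro tendsto_intros xy0)
    thus ?thesis using d\<omega> by (intro order_tendstoD(2)) auto
  qed
  have ev8: "\<forall>\<^sub>F n in sequentially. pn (\<sigma> n) < d\<omega>/4" using pn0[of "d\<omega>/8"] d\<omega> by simp
  have "\<forall>\<^sub>F n in sequentially. tb/2 < tt (\<sigma> n) \<and> tb/2 < ss (\<sigma> n)
     \<and> 2*Cabs*\<bar>tt (\<sigma> n) powr (-\<alpha>) - ss (\<sigma> n) powr (-\<alpha>)\<bar> / \<Gamma> < \<Theta>/8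
     \<and> u 0 (xx (\<sigma> n)) - v 0 (yy (\<sigma> n)) < \<eta>2 \<and> K4 * \<bar>tt (\<sigma> n) - ss (\<sigma> n)\<bar> < \<Theta>/8
     \<and> \<epsilon> (\<sigma> n) < \<Theta>/8 \<and> norm (xx (\<sigma> n) - yy (\<sigma> n)) < d\<omega>/2 \<and> pn (\<sigma> n) < d\<omega>/4"
    by (intro eventually_conj ev1 ev2 ev3 ev4 ev5 ev6 ev7 ev8)
  then obtain N where N: "tb/2 < tt (\<sigma> N)" "tb/2 < ss (\<sigma> N)"
     "2*Cabs*\<bar>tt (\<sigma> N) powr (-\<alpha>) - ss (\<sigma> N) powr (-\<alpha>)\<bar> / \<Gamma> < \<Theta>/8"
     "u 0 (xx (\<sigma> N)) - v 0 (yy (\<sigma> N)) < \<eta>2" "K4 * \<bar>tt (\<sigma> N) - ss (\<sigma> N)\<bar> < \<Theta>/8"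
     "\<epsilon> (\<sigma> N) < \<Theta>/8" "norm (xx (\<sigma> N) - yy (\<sigma> N)) < d\<omega>/2" "pn (\<sigma> N) < d\<omega>/4"
    unfolding eventually_sequentially by blast
  define k where "k = \<sigma> N"
  define tk where "tk = tt k"
  define xk where "xk = xx k"
  define sk where "sk = ss k"
  define yk where "yk = yy k"
  note N = N[folded k_def, folded tk_def xk_def sk_def yk_def]

  have tkpos: "0 < tk" "tk \<le> T" "0 < sk" "sk \<le> T" using N(1,2) tbpos qqin[of k] unfolding tk_def sk_def by auto
  define KJ where "KJ = c * ((1/(2*\<delta> k)) * (3*T)) / (1-\<alpha>)"
  obtain r where r: "0 < r" "r \<le> tk" "r \<le> sk" "r \<le> T" "KJ * r powr (1-\<alpha>) < \<Theta>/16"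
  proof -
    have "((\<lambda>r. r powr (1-\<alpha>)) \<longlongrightarrow> 0) (at_right 0)"
    proof (rule tendsto_zero_powrI)
      show "((\<lambda>r::real. r) \<longlongrightarrow> 0) (at_right 0)" by (rule tendsto_ident_at)
      show "((\<lambda>r::real. 1 - \<alpha>) \<longlongrightarrow> 1 - \<alpha>) (at_right 0)" by (rule tendsto_const)
      show "\<forall>\<^sub>F r in at_right 0. 0 \<le> (r::real)" using eventually_at_right_less[of "0::real"] by (rule eventually_mono) simp
      show "0 < 1 - \<alpha>" using alpha by simp
    qed
    hence "((\<lambda>r. KJ * r powr (1-\<alpha>)) \<longlongrightarrow> KJ * 0) (at_right 0)" by (intro tendsto_intros)
    hence "\<forall>\<^sub>F r in at_right 0. KJ * r powr (1-\<alpha>) < \<Theta>/16" using \<Theta>pos by (intro order_tendstoD(2)) auto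
    then obtain b where b: "b > 0" "\<forall>y>0. y < b \<longrightarrow> KJ * y powr (1-\<alpha>) < \<Theta>/16"
      unfolding eventually_at_right_field by auto
    define r where "r = min (b/2) (min tk (min sk T))"
    have "0 < r" "r < b" using b tkpos T unfolding r_def by auto
    thus ?thesis using b that[of r] unfolding r_def by auto
  qed
  have UVk: "v sk yk \<le> u tk xk" using UV[of k] unfolding tk_def xk_def sk_def yk_def .
  have maxG: "\<forall>t'\<in>{0..T}. \<forall>x'. \<forall>s'\<in>{0..T}. \<forall>y'.
       u t' x' - v s' y' - ((1/(2*\<epsilon> k))*((x'-y')\<bullet>(x'-y')) + (1/(2*\<delta> k))*(t'-s')^2)
       \<le> u tk xk - v sk yk - ((1/(2*\<epsilon> k))*((xk-yk)\<bullet>(xk-yk)) + (1/(2*\<delta> k))*(tk-sk)^2)"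
    using globmax[of _ _ k] unfolding Ph_def pen_def tk_def xk_def sk_def yk_def by blast
  note cr = core[OF alpha sub super Mu mv tkpos(1) tkpos(2) tkpos(3) tkpos(4) ep(1)[of k] dpos[of k] r(1) r(2) r(3) UVk maxG]
  have Jb: "\<alpha>/Gamma(1-\<alpha>) * (\<bar>B\<bar>*(2*\<bar>t-s\<bar>+r) * (r powr (1-\<alpha>) / (1-\<alpha>))) \<le> KJ * r powr (1-\<alpha>)"
    if "\<bar>B\<bar> = 1/(2*\<delta> k)" "t \<in> {0..T}" "s \<in> {0..T}" for B t s
  proof -
    have "\<bar>t-s\<bar> \<le> T" using that(2,3) by (auto simp: abs_le_iff)
    hence "2*\<bar>t-s\<bar>+r \<le> 3*T" using r(4) by (smt (verit))
    hence "\<bar>B\<bar>*(2*\<bar>t-s\<bar>+r) \<le> \<bar>B\<bar>*(3*T)" by (intro mult_left_mono) auto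
    hence "\<bar>B\<bar>*(2*\<bar>t-s\<bar>+r) * (r powr (1-\<alpha>) / (1-\<alpha>)) \<le> \<bar>B\<bar>*(3*T) * (r powr (1-\<alpha>) / (1-\<alpha>))"
      using alpha by (intro mult_right_mono) auto
    hence "\<alpha>/Gamma(1-\<alpha>) * (\<bar>B\<bar>*(2*\<bar>t-s\<bar>+r) * (r powr (1-\<alpha>) / (1-\<alpha>)))
        \<le> \<alpha>/Gamma(1-\<alpha>) * (\<bar>B\<bar>*(3*T) * (r powr (1-\<alpha>) / (1-\<alpha>)))"
      using cpos unfolding c_def \<Gamma>_def by (intro mult_left_mono) auto
    also have "\<dots> = KJ * r powr (1-\<alpha>)" unfolding KJ_def c_def \<Gamma>_def that(1) by simp
    finally show ?thesis .
  qed
  have Ju: "\<bar>J_op \<alpha> r (\<lambda>t' x'. (1/(2*\<epsilon> k))*((x'-yk)\<bullet>(x'-yk)) + (1/(2*\<delta> k))*(t'-sk)^2) tk xk\<bar> \<le> KJ * r powr (1-\<alpha>)"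
    using J_quad_bound[OF alpha r(1), where A="1/(2*\<epsilon> k)" and B="1/(2*\<delta> k)" and y=yk and s=sk and t=tk and x=xk]
      Jb[of "1/(2*\<delta> k)" tk sk] dpos[of k] tkpos by simp
  have Jv: "\<bar>J_op \<alpha> r (\<lambda>s' y'. (-1/(2*\<epsilon> k))*((y'-xk)\<bullet>(y'-xk)) + (-1/(2*\<delta> k))*(s'-tk)^2) sk yk\<bar> \<le> KJ * r powr (1-\<alpha>)"
    using J_quad_bound[OF alpha r(1), where A="-1/(2*\<epsilon> k)" and B="-1/(2*\<delta> k)" and y=xk and s=tk and t=sk and x=yk]
      Jb[of "-1/(2*\<delta> k)" sk tk] dpos[of k] tkpos by simp

  define U where "U = u tk xk"
  define V where "V = v sk yk"
  define p where "p = (1/\<epsilon> k) *\<^sub>R (xk - yk)"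
  have UV': "V \<le> U" "\<theta> \<le> U - V" using UVk wpn[of k] pnn[of k] unfolding U_def V_def w_def tk_def xk_def sk_def yk_def by auto
  have Vr: "V \<in> {mv..Mu}" using Vs[of k] Ut[of k] UVk unfolding V_def tk_def xk_def sk_def yk_def by auto
  have h1: "H tk xk V p \<le> H tk xk U p" using A3 UV'(1) by (metis monoD)
  have h2: "\<bar>H tk xk V p - H sk xk V p\<bar> < \<epsilon> k"
  proof -
    have "xk \<in> Q" using qqin[of k] unfolding xk_def by simp
    moreover have "norm p \<le> Rp k" using ppR[of k] unfolding p_def pp_def xk_def yk_def .
    moreover have "(tk - sk)^2 \<le> 2*\<delta> k*C" using ts_le[of k] unfolding tk_def sk_def .
    ultimately show ?thesis using \<delta> tkpos Vr by auto
  qed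
  have h3: "\<bar>H sk xk V p - H sk yk V p\<bar> \<le> \<omega> (norm (xk - yk) * (1 + norm p))"
    using \<omega>(2) tkpos by auto
  have h4: "\<omega> (norm (xk - yk) * (1 + norm p)) < \<Theta>/8"
  proof (rule d\<omega>(2))
    show "0 \<le> norm (xk - yk) * (1 + norm p)" by simp
    have np: "norm p = norm (xk - yk) / \<epsilon> k" unfolding p_def using ep(1)[of k] by simp
    have "norm (xk - yk) * norm (xk - yk) = I k" unfolding xk_def yk_def I_def by (simp add: norm_eq_sqrt_inner)
    hence "norm (xk - yk) * norm p = 2 * ((1/(2*\<epsilon> k)) * I k)" unfolding np by (simp add: field_simps)
    also have "\<dots> \<le> 2 * pn k" using Ipn[of k] by simp
    finally have "norm (xk - yk) * (1 + norm p) \<le> norm (xk - yk) + 2 * pn k" by (simp add: algebra_simps)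
    thus "norm (xk - yk) * (1 + norm p) < d\<omega>" using N(7) N(8) unfolding k_def by simp
  qed
  have Mu0: "u 0 xk \<le> Mu" "mv \<le> v 0 yk" using Mu mv T by auto
  have Bb: "(\<theta> * T powr (-\<alpha>) - 2*Cabs*\<bar>tk powr (-\<alpha>) - sk powr (-\<alpha>)\<bar> - \<eta>2 * (tb/2) powr (-\<alpha>)) / \<Gamma>
     \<le> (U - u 0 xk)/(tk powr \<alpha> * \<Gamma>) - (V - v 0 yk)/(sk powr \<alpha> * \<Gamma>)"
  proof (rule B_bound)
    show "0 < tk" "tk \<le> T" "0 < sk" using tkpos by auto
    show "0 < tb" "tb/2 \<le> tk" "tb/2 \<le> sk" using tbpos N(1,2) by auto
    show "0 < \<alpha>" "0 < \<Gamma>" "\<theta> \<le> U - V" "0 < \<theta>" using alpha \<Gamma>pos UV' thpos by auto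
    show "\<bar>V\<bar> \<le> Cabs" using Vr unfolding Cabs_def by auto
    show "u 0 xk - v 0 yk \<le> \<eta>2" "0 \<le> \<eta>2" using N(4) \<eta>2pos unfolding k_def by auto
    show "u 0 xk \<le> Cabs" "- Cabs \<le> v 0 yk" using Mu0 unfolding Cabs_def by auto
  qed
  have Bb2: "(\<theta> * T powr (-\<alpha>) - 2*Cabs*\<bar>tk powr (-\<alpha>) - sk powr (-\<alpha>)\<bar> - \<eta>2 * (tb/2) powr (-\<alpha>)) / \<Gamma>
      = \<Theta> - 2*Cabs*\<bar>tk powr (-\<alpha>) - sk powr (-\<alpha>)\<bar> / \<Gamma> - \<Theta>/8"
    using \<eta>2eq \<Gamma>pos unfolding \<Theta>_def m2_def by (simp add: diff_divide_distrib)
  have mb: "\<alpha>/Gamma(1-\<alpha>) * ((Mu - mv) * (min tk sk) powr (-\<alpha>-1) * \<bar>tk-sk\<bar>) \<le> K4 * \<bar>tk - sk\<bar>"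
  proof -
    have "(min tk sk) powr (-\<alpha>-1) \<le> (tb/2) powr (-\<alpha>-1)"
      using N(1,2) tbpos alpha by (intro powr_mono2') auto
    hence "(Mu - mv) * (min tk sk) powr (-\<alpha>-1) * \<bar>tk-sk\<bar> \<le> C * (tb/2) powr (-\<alpha>-1) * \<bar>tk-sk\<bar>"
      using Cpos unfolding C_def by (intro mult_right_mono mult_left_mono) auto
    hence "\<alpha>/Gamma(1-\<alpha>) * ((Mu - mv) * (min tk sk) powr (-\<alpha>-1) * \<bar>tk-sk\<bar>)
        \<le> \<alpha>/Gamma(1-\<alpha>) * (C * (tb/2) powr (-\<alpha>-1) * \<bar>tk-sk\<bar>)"
      using cpos unfolding c_def \<Gamma>_def by (intro mult_left_mono) auto
    also have "\<dots> = K4 * \<bar>tk - sk\<bar>" unfolding K4_def c_def \<Gamma>_def by (simp add: mult.assoc)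
    finally show ?thesis .
  qed
  have fin: "J_op \<alpha> r (\<lambda>t' x'. (1/(2*\<epsilon> k))*((x'-yk)\<bullet>(x'-yk)) + (1/(2*\<delta> k))*(t'-sk)^2) tk xk
       - J_op \<alpha> r (\<lambda>s' y'. (-1/(2*\<epsilon> k))*((y'-xk)\<bullet>(y'-xk)) + (-1/(2*\<delta> k))*(s'-tk)^2) sk yk
       + ((U - u 0 xk)/(tk powr \<alpha> * \<Gamma>) - (V - v 0 yk)/(sk powr \<alpha> * \<Gamma>))
       - \<alpha>/Gamma(1-\<alpha>) * ((Mu - mv) * (min tk sk) powr (-\<alpha>-1) * \<bar>tk-sk\<bar>)
       + H tk xk U p - H sk yk V p \<le> 0"
    using cr unfolding U_def V_def p_def \<Gamma>_def by simp
  have "\<epsilon> k < \<Theta>/8" "K4 * \<bar>tk - sk\<bar> < \<Theta>/8" "2*Cabs*\<bar>tk powr (-\<alpha>) - sk powr (-\<alpha>)\<bar> / \<Gamma> < \<Theta>/8"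
    using N(3,5,6) unfolding k_def by auto
  with fin Ju Jv r(5) h1 h2 h3 h4 Bb Bb2 mb \<Theta>pos show False by linarith
qed

end
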